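(* Let $a,b\in C^0(\mathbb{R})$ be even and positive, and let $G\in C^0(\mathbb{R})$ be even with $G(s)\ge G(M)=0$ for all $s\in\mathbb{R}$ and $G(s)>0$ for $s\in[0,M)$, for some $M>0$. Let $L>0$, $I:=(-L,L)$, and let $(u_{m_k})_{k\ge1}$ be a sequence such that each $u_{m_k}$ is a minimizer of $\mathcal{E}(\cdot,I)$ in $H^1_{m_k}(I)$, where $m_k\ge0$ and $m_k\to m$. Then, up to a subsequence, $u_{m_k}\to u_m$ in $H^1(I)$, where $u_m$ is a minimizer of $\mathcal{E}(\cdot,I)$ in $H^1_m(I)$. In particular, $u_{m_k}\to u_m$ in $C^0(\overline I)$.
   Context: $H^1_m(I):=\{u\in H^1(I):u(-L)=-m,\ u(L)=m\}$ and $\mathcal{E}(u,I):=\int_{-L}^L\{\tfrac12(u')^2a(x)+G(u)b(x)\}\,dx$; minimizer means absolute minimizer. *)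

theory Defs
  imports "HOL-Analysis.Analysis"
begin

text \<open>Sobolev space H^1 on the interval I = (-L,L), via the continuous representative:
  u is in H^1(I) iff there is a square-integrable v on [-L,L] with
  u x = u(-L) + integral of v over [-L,x] for all x in [-L,L]; v is then the weak derivative.\<close>

definition is_wderiv :: "real \<Rightarrow> (real \<Rightarrow> real) \<Rightarrow> (real \<Rightarrow> real) \<Rightarrow> bool" where
  "is_wderiv L u v \<longleftrightarrow>
     set_borel_measurable lborel {-L..L} v \<and>
     set_integrable lborel {-L..L} (\<lambda>x. (v x)\<^sup>2) \<and>
     (\<forall>x\<in>{-L..L}. u x = u (-L) + (LINT t:{-L..x}|lborel. v t))"

definition H1 :: "real \<Rightarrow> (real \<Rightarrow> real) \<Rightarrow> bool" where
  "H1 L u \<longleftrightarrow> (\<exists>v. is_wderiv L u v)"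

definition H1m :: "real \<Rightarrow> real \<Rightarrow> (real \<Rightarrow> real) \<Rightarrow> bool" where
  "H1m L m u \<longleftrightarrow> H1 L u \<and> u (-L) = -m \<and> u L = m"

definition energy :: "(real \<Rightarrow> real) \<Rightarrow> (real \<Rightarrow> real) \<Rightarrow> (real \<Rightarrow> real) \<Rightarrow> real
    \<Rightarrow> (real \<Rightarrow> real) \<Rightarrow> (real \<Rightarrow> real) \<Rightarrow> real" where
  "energy a b G L u v = (LINT x:{-L..L}|lborel. (1/2) * (v x)\<^sup>2 * a x + G (u x) * b x)"

definition minimizer :: "(real \<Rightarrow> real) \<Rightarrow> (real \<Rightarrow> real) \<Rightarrow> (real \<Rightarrow> real) \<Rightarrow> real
    \<Rightarrow> real \<Rightarrow> (real \<Rightarrow> real) \<Rightarrow> bool" where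
  "minimizer a b G L m u \<longleftrightarrow> H1m L m u \<and>
     (\<forall>w v v'. H1m L m w \<longrightarrow> is_wderiv L u v \<longrightarrow> is_wderiv L w v' \<longrightarrow>
        energy a b G L u v \<le> energy a b G L w v')"

definition H1_converges :: "real \<Rightarrow> (nat \<Rightarrow> real \<Rightarrow> real) \<Rightarrow> (real \<Rightarrow> real) \<Rightarrow> bool" where
  "H1_converges L f g \<longleftrightarrow>
     (\<lambda>k. LINT x:{-L..L}|lborel. (f k x - g x)\<^sup>2) \<longlonglongrightarrow> 0 \<and>
     (\<forall>v w. is_wderiv L g v \<longrightarrow> (\<forall>k. is_wderiv L (f k) (w k)) \<longrightarrow>
        (\<lambda>k. LINT x:{-L..L}|lborel. (w k x - v x)\<^sup>2) \<longlonglongrightarrow> 0)"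

end

theory Submission
  imports Defs "HOL-Complex_Analysis.Great_Picard"
begin


lemma amgm_abs: "0 < t \<Longrightarrow> \<bar>z::real\<bar> \<le> z\<^sup>2/(2*t) + t/2"
proof -
  assume t: "0 < t"
  have "0 \<le> (\<bar>z\<bar> - t)\<^sup>2" by simp
  hence "2*t*\<bar>z\<bar> \<le> z\<^sup>2 + t\<^sup>2" by (simp add: power2_eq_square algebra_simps)
  thus ?thesis using t by (simp add: field_simps power2_eq_square)
qed

lemma ind_const_int: "integrable lborel (\<lambda>x. indicator {a..b::real} x * (c::real))"
  by (intro integrable_mult_left integrable_real_indicator) (auto simp: emeasure_lborel_Icc_eq)

lemma ind_Ioc_int: "integrable lborel (\<lambda>x. indicator {a<..b::real} x * (c::real))"
proof (cases "a \<le> b")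
  case True thus ?thesis by (intro integrable_mult_left integrable_real_indicator) auto
next
  case False hence "{a<..b} = {}" by auto
  thus ?thesis by simp
qed

lemma wd_meas: assumes "is_wderiv L u v" shows "(\<lambda>x. indicator {-L..L} x * v x) \<in> borel_measurable lborel"
  using assms unfolding is_wderiv_def set_borel_measurable_def by simp

lemma wd_sq_int: "is_wderiv L u v \<Longrightarrow> integrable lborel (\<lambda>x. (indicator {-L..L} x * v x)\<^sup>2)"
proof -
  assume "is_wderiv L u v"
  hence "integrable lborel (\<lambda>x. indicator {-L..L} x * (v x)\<^sup>2)"
    by (simp add: is_wderiv_def set_integrable_def)
  moreover have "(indicator {-L..L} x * v x)\<^sup>2 = indicator {-L..L} x * (v x)\<^sup>2" for x
    by (simp add: indicator_def power2_eq_square)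
  ultimately show ?thesis by simp
qed

lemma ind_sq: "(indicator S x * (f::real))\<^sup>2 = indicator S x * f\<^sup>2"
  by (simp add: indicator_def power2_eq_square)

lemma sq_int_imp_int:
  fixes V :: "real \<Rightarrow> real"
  assumes m: "V \<in> borel_measurable lborel" and i: "integrable lborel (\<lambda>x. (V x)\<^sup>2)"
    and z: "\<And>x. x \<notin> {a..b} \<Longrightarrow> V x = 0"
  shows "integrable lborel V"
proof (rule Bochner_Integration.integrable_bound)
  show "integrable lborel (\<lambda>x. (V x)\<^sup>2/2 + indicator {a..b} x * (1/2::real))"
    using i ind_const_int by (intro Bochner_Integration.integrable_add) auto
  show "AE x in lborel. norm (V x) \<le> norm ((V x)\<^sup>2/2 + indicator {a..b} x * (1/2::real))"
  proof (intro AE_I2)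
    fix x show "norm (V x) \<le> norm ((V x)\<^sup>2/2 + indicator {a..b} x * (1/2::real))"
      using amgm_abs[of 1 "V x"] z[of x] by (cases "x \<in> {a..b}") auto
  qed
qed (fact m)

lemma wd_int: "is_wderiv L u v \<Longrightarrow> integrable lborel (\<lambda>x. indicator {-L..L} x * v x)"
  apply (rule sq_int_imp_int[where a="-L" and b=L])
  apply (erule wd_meas)
  apply (erule wd_sq_int)
  by simp

lemma ind_sub: "S \<subseteq> T \<Longrightarrow> indicator S x * (indicator T x * (f::real)) = indicator S x * f"
  by (auto simp: indicator_def)

lemma wd_sub_int:
  assumes "is_wderiv L u v" "S \<subseteq> {-L..L}" "S \<in> sets borel"
  shows "integrable lborel (\<lambda>t. indicator S t * v t)"
proof -
  have "integrable lborel (\<lambda>t. indicator S t *\<^sub>R (indicator {-L..L} t * v t))"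
    using assms by (intro integrable_mult_indicator wd_int) auto
  thus ?thesis using ind_sub[OF assms(2)] by simp
qed

lemma wd_eq:
  assumes w: "is_wderiv L u v" and x: "x \<in> {-L..L}"
  shows "u x = u (-L) + (LINT t|lborel. indicator {-L..x} t * v t)"
proof -
  have "u x = u (-L) + set_lebesgue_integral lborel {-L..x} v"
    using w x unfolding is_wderiv_def by blast
  thus ?thesis unfolding set_lebesgue_integral_def real_scaleR_def .
qed

lemma wd_diff:
  assumes w: "is_wderiv L u v" and yx: "-L \<le> y" "y \<le> x" "x \<le> L"
  shows "u x - u y = (LINT t|lborel. indicator {y<..x} t * v t)"
proof -
  have ux: "u x = u (-L) + (LINT t|lborel. indicator {-L..x} t * v t)"
    using yx by (intro wd_eq[OF w]) simp
  have uy: "u y = u (-L) + (LINT t|lborel. indicator {-L..y} t * v t)"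
    using yx by (intro wd_eq[OF w]) simp
  have i1: "integrable lborel (\<lambda>t. indicator {-L..x} t * v t)"
    using yx by (intro wd_sub_int[OF w]) auto
  have i2: "integrable lborel (\<lambda>t. indicator {-L..y} t * v t)"
    using yx by (intro wd_sub_int[OF w]) auto
  have "u x - u y = (LINT t|lborel. indicator {-L..x} t * v t) - (LINT t|lborel. indicator {-L..y} t * v t)"
    using ux uy by linarith
  also have "\<dots> = (LINT t|lborel. indicator {-L..x} t * v t - indicator {-L..y} t * v t)"
    by (rule Bochner_Integration.integral_diff[OF i1 i2, symmetric])
  also have "\<dots> = (LINT t|lborel. indicator {y<..x} t * v t)"
  proof (rule Bochner_Integration.integral_cong[OF refl])
    fix t show "indicator {-L..x} t * v t - indicator {-L..y} t * v t = indicator {y<..x} t * (v t::real)"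
      using yx by (cases "t \<le> y"; cases "t \<le> x"; cases "-L \<le> t") (auto simp: indicator_def)
  qed
  finally show ?thesis .
qed

lemma wd_bound:
  assumes w: "is_wderiv L u v" and yx: "-L \<le> y" "y \<le> x" "x \<le> L" and t: "0 < t"
    and K: "(LINT t|lborel. (indicator {-L..L} t * v t)\<^sup>2) \<le> K"
  shows "\<bar>u x - u y\<bar> \<le> K/(2*t) + t*(x-y)/2"
proof -
  have "\<bar>u x - u y\<bar> = \<bar>LINT s|lborel. indicator {y<..x} s * v s\<bar>"
    using wd_diff[OF w yx] by simp
  also have "\<dots> \<le> (LINT s|lborel. \<bar>indicator {y<..x} s * v s\<bar>)"
    by (rule integral_abs_bound)
  also have "\<dots> \<le> (LINT s|lborel. (indicator {-L..L} s * v s)\<^sup>2 / (2*t) + indicator {y<..x} s * (t/2))"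
  proof (rule integral_mono)
    show "integrable lborel (\<lambda>s. \<bar>indicator {y<..x} s * v s\<bar>)"
      using yx by (intro integrable_abs wd_sub_int[OF w]) auto
    show "integrable lborel (\<lambda>s. (indicator {-L..L} s * v s)\<^sup>2 / (2*t) + indicator {y<..x} s * (t/2))"
      using wd_sq_int[OF w] ind_Ioc_int by (intro Bochner_Integration.integrable_add integrable_divide) auto
    fix s show "\<bar>indicator {y<..x} s * v s\<bar> \<le> (indicator {-L..L} s * v s)\<^sup>2 / (2*t) + indicator {y<..x} s * (t/2)"
      using amgm_abs[OF t, of "v s"] yx t by (cases "s \<in> {y<..x}"; cases "s \<in> {-L..L}") auto
  qed
  also have "\<dots> = (LINT s|lborel. (indicator {-L..L} s * v s)\<^sup>2) / (2*t) + t*(x-y)/2"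
    using wd_sq_int[OF w] ind_Ioc_int yx
  proof -
    have e1: "(LINT s|lborel. indicator {y<..x} s * (t/2)) = t*(x-y)/2"
    proof -
      have "(LINT s|lborel. indicator {y<..x} s * (t/2)) = (LINT s|lborel. indicator {y<..x} s) * (t/2)"
        by (rule integral_mult_left_zero)
      also have "(LINT s|lborel. indicator {y<..x} s) = measure lborel {y<..x}"
        by (simp only: Bochner_Integration.integral_indicator space_lborel space_borel Int_UNIV_right)
      also have "\<dots> = x - y" using yx by (simp only: measure_lborel_Ioc)
      also have "(x - y) * (t/2) = t*(x-y)/2" by (simp add: field_simps)
      finally show ?thesis .
    qed
    show ?thesis
      using wd_sq_int[OF w] ind_Ioc_int[of y x "t/2"]
      by (subst Bochner_Integration.integral_add) (auto simp only: e1 integral_divide_zero integrable_divide)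
  qed
  also have "\<dots> \<le> K/(2*t) + t*(x-y)/2"
    using K t by (simp add: divide_right_mono)
  finally show ?thesis .
qed

lemma zero_AE_from_rays:
  fixes h :: "real \<Rightarrow> real"
  assumes int: "integrable lborel h" and z: "\<And>c. (LINT x|lborel. indicator {c<..} x * h x) = 0"
  shows "AE x in lborel. h x = 0"
proof -
  have hm[measurable]: "h \<in> borel_measurable lborel" using int by auto
  define p where "p x = ennreal (h x)" for x
  define q where "q x = ennreal (- h x)" for x
  have pm[measurable]: "p \<in> borel_measurable lborel" unfolding p_def by measurable
  have qm[measurable]: "q \<in> borel_measurable lborel" unfolding q_def by measurable
  have key: "(\<integral>\<^sup>+x. p x * indicator {c<..} x \<partial>lborel) = (\<integral>\<^sup>+x. q x * indicator {c<..} x \<partial>lborel)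
     \<and> (\<integral>\<^sup>+x. p x * indicator {c<..} x \<partial>lborel) < \<infinity>" for c
  proof -
    define f1 where "f1 x = indicator {c<..} x * max 0 (h x)" for x
    define f2 where "f2 x = indicator {c<..} x * max 0 (- h x)" for x
    have i1: "integrable lborel f1" unfolding f1_def
      using int by (intro integrable_mult_indicator[of _ _ "\<lambda>x. max 0 (h x)", simplified]) auto
    have i2: "integrable lborel f2" unfolding f2_def
      using int by (intro integrable_mult_indicator[of _ _ "\<lambda>x. max 0 (- h x)", simplified]) auto
    have e1: "p x * indicator {c<..} x = ennreal (f1 x)" for x
      unfolding p_def f1_def by (cases "x \<in> {c<..}"; cases "h x \<ge> 0") (auto simp: ennreal_neg)
    have e2: "q x * indicator {c<..} x = ennreal (f2 x)" for x
      unfolding q_def f2_def by (cases "x \<in> {c<..}"; cases "h x \<ge> 0") (auto simp: ennreal_neg)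
    have n1: "(\<integral>\<^sup>+x. p x * indicator {c<..} x \<partial>lborel) = ennreal (LINT x|lborel. f1 x)"
      unfolding e1 by (rule nn_integral_eq_integral[OF i1]) (auto simp: f1_def)
    have n2: "(\<integral>\<^sup>+x. q x * indicator {c<..} x \<partial>lborel) = ennreal (LINT x|lborel. f2 x)"
      unfolding e2 by (rule nn_integral_eq_integral[OF i2]) (auto simp: f2_def)
    have "(LINT x|lborel. f1 x) - (LINT x|lborel. f2 x) = (LINT x|lborel. f1 x - f2 x)"
      by (rule Bochner_Integration.integral_diff[OF i1 i2, symmetric])
    also have "\<dots> = (LINT x|lborel. indicator {c<..} x * h x)"
      by (rule Bochner_Integration.integral_cong[OF refl]) (auto simp: f1_def f2_def indicator_def)
    also have "\<dots> = 0" by (rule z)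
    finally have "(LINT x|lborel. f1 x) = (LINT x|lborel. f2 x)" by simp
    thus ?thesis using n1 n2 by simp
  qed
  have "density lborel p = density lborel q"
  proof (rule measure_eqI_lessThan)
    show "sets (density lborel p) = sets borel" "sets (density lborel q) = sets borel" by auto
    fix c
    show "emeasure (density lborel p) {c<..} < \<infinity>"
      using key[of c] by (subst emeasure_density) auto
    show "emeasure (density lborel p) {c<..} = emeasure (density lborel q) {c<..}"
    proof -
      have "emeasure (density lborel p) {c<..} = (\<integral>\<^sup>+x. p x * indicator {c<..} x \<partial>lborel)"
        by (rule emeasure_density) auto
      moreover have "emeasure (density lborel q) {c<..} = (\<integral>\<^sup>+x. q x * indicator {c<..} x \<partial>lborel)"
        by (rule emeasure_density) auto
      ultimately show ?thesis using key[of c] by simp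
    qed
  qed
  note dq = this
  have "AE x in lborel. p x = q x"
  proof (rule sigma_finite_measure.density_unique2[OF sigma_finite_lborel])
    fix A :: "real set" assume A: "A \<in> sets lborel"
    have "(\<integral>\<^sup>+x\<in>A. p x \<partial>lborel) = emeasure (density lborel p) A"
      using emeasure_density[OF pm A] by simp
    also have "\<dots> = emeasure (density lborel q) A" by (simp only: dq)
    also have "\<dots> = (\<integral>\<^sup>+x\<in>A. q x \<partial>lborel)"
      using emeasure_density[OF qm A] by simp
    finally show "(\<integral>\<^sup>+x\<in>A. p x \<partial>lborel) = (\<integral>\<^sup>+x\<in>A. q x \<partial>lborel)" .
  qed (auto)
  thus ?thesis
  proof (rule AE_mp[OF _ AE_I2], intro impI)
    fix x assume "p x = q x"
    thus "h x = 0" unfolding p_def q_def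
      by (cases "h x \<ge> 0") (auto simp: ennreal_neg)
  qed
qed

lemma wd_unique:
  assumes w1: "is_wderiv L u v1" and w2: "is_wderiv L u v2" and Lp: "0 < L"
  shows "AE x in lborel. indicator {-L..L} x * v1 x = indicator {-L..L} x * v2 x"
proof -
  define h where "h x = indicator {-L..L} x * v1 x - indicator {-L..L} x * v2 x" for x
  have hi: "integrable lborel h" unfolding h_def using wd_int[OF w1] wd_int[OF w2] by auto
  have hm[measurable]: "h \<in> borel_measurable lborel" using hi by auto
  have mid: "(LINT x|lborel. indicator {c<..} x * h x) = 0" if c: "-L \<le> c" "c \<le> L" for c
  proof -
    have i1: "integrable lborel (\<lambda>t. indicator {c<..L} t * v1 t)"
      using c by (intro wd_sub_int[OF w1]) auto
    have i2: "integrable lborel (\<lambda>t. indicator {c<..L} t * v2 t)"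
      using c by (intro wd_sub_int[OF w2]) auto
    have "(LINT x|lborel. indicator {c<..} x * h x) = (LINT x|lborel. indicator {c<..L} x * v1 x - indicator {c<..L} x * v2 x)"
      using c by (intro Bochner_Integration.integral_cong[OF refl]) (auto simp: h_def indicator_def)
    also have "\<dots> = (LINT x|lborel. indicator {c<..L} x * v1 x) - (LINT x|lborel. indicator {c<..L} x * v2 x)"
      by (rule Bochner_Integration.integral_diff[OF i1 i2])
    also have "\<dots> = (u L - u c) - (u L - u c)"
      using wd_diff[OF w1, of c L] wd_diff[OF w2, of c L] c by simp
    finally show ?thesis by simp
  qed
  show ?thesis
  proof -
    have "AE x in lborel. h x = 0"
    proof (rule zero_AE_from_rays[OF hi])
      fix c
      show "(LINT x|lborel. indicator {c<..} x * h x) = 0"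
      proof (cases "c < -L")
        case True
        have "-L \<le> L" using Lp by simp
        have "(LINT x|lborel. indicator {c<..} x * h x) = (LINT x|lborel. indicator {-L<..} x * h x)"
        proof (rule integral_cong_AE)
          show "AE x in lborel. indicator {c<..} x * h x = indicator {-L<..} x * h x"
            using AE_lborel_singleton[of "-L"]
            by eventually_elim (use True in \<open>auto simp: h_def indicator_def\<close>)
        qed auto
        also have "\<dots> = 0" using mid[of "-L"] \<open>-L \<le> L\<close> by simp
        finally show ?thesis .
      next
        case False
        show ?thesis
        proof (cases "c \<le> L")
          case True thus ?thesis using mid False by simp
        next
          case F2: False
          have "(\<lambda>x. indicator {c<..} x * h x) = (\<lambda>x. 0)"
            using F2 by (auto simp: h_def indicator_def)
          thus ?thesis by simp
        qed
      qed
    qed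
    thus ?thesis by eventually_elim (simp add: h_def)
  qed
qed

lemma wd_equi:
  assumes w: "is_wderiv L u v" and K: "(LINT t|lborel. (indicator {-L..L} t * v t)\<^sup>2) \<le> K"
    and x: "x \<in> {-L..L}" and y: "y \<in> {-L..L}" and e: "0 < e" and d: "\<bar>x - y\<bar> < e/(K/e+1)"
  shows "\<bar>u x - u y\<bar> < e"
proof -
  have "0 \<le> (LINT t|lborel. (indicator {-L..L} t * v t)\<^sup>2)" by (rule Bochner_Integration.integral_nonneg) simp
  hence K0: "0 \<le> K" using K by linarith
  define t where "t = K/e + 1"
  have "0 \<le> K/e" using K0 e by simp
  hence t: "0 < t" by (simp add: t_def)
  have a1: "K/(2*t) < e/2"
  proof -
    have "K < e*t" using e K0 by (simp add: t_def field_simps)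
    thus ?thesis using t e by (simp add: field_simps)
  qed
  have "\<bar>x-y\<bar> < e/t" using d by (simp only: t_def)
  hence "t*\<bar>x-y\<bar> < t*(e/t)" using t by (rule mult_strict_left_mono)
  hence a2: "t*\<bar>x-y\<bar>/2 < e/2" using t by simp
  show ?thesis
  proof (cases "y \<le> x")
    case True
    have "\<bar>u x - u y\<bar> \<le> K/(2*t) + t*(x-y)/2"
      using x y True by (intro wd_bound[OF w _ _ _ t K]) auto
    thus ?thesis using a1 a2 True by simp
  next
    case False
    have "\<bar>u y - u x\<bar> \<le> K/(2*t) + t*(y-x)/2"
      using x y False by (intro wd_bound[OF w _ _ _ t K]) auto
    thus ?thesis using a1 a2 False by (simp add: abs_minus_commute)
  qed
qed

lemma wd_cont:
  assumes w: "is_wderiv L u v"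
  shows "continuous_on {-L..L} u"
  unfolding continuous_on_iff
proof (intro ballI allI impI)
  fix x e :: real assume x: "x \<in> {-L..L}" and e: "0 < e"
  define K where "K = (LINT t|lborel. (indicator {-L..L} t * v t)\<^sup>2)"
  have K0: "0 \<le> K" unfolding K_def by (rule Bochner_Integration.integral_nonneg) simp
  show "\<exists>d>0. \<forall>x'\<in>{-L..L}. dist x' x < d \<longrightarrow> dist (u x') (u x) < e"
  proof (intro exI conjI ballI impI)
    have "0 \<le> K/e" using K0 e by simp
    thus "0 < e/(K/e+1)" using e by simp
    fix y assume y: "y \<in> {-L..L}" and "dist y x < e/(K/e+1)"
    thus "dist (u y) (u x) < e" using wd_equi[OF w order_refl y x e] by (simp add: dist_real_def K_def)
  qed
qed

lemma cont_bound:
  assumes "continuous_on UNIV (f::real\<Rightarrow>real)"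
  obtains B where "B > 0" "\<And>x. x \<in> {c..d} \<Longrightarrow> \<bar>f x\<bar> \<le> B"
proof -
  have "compact (f ` {c..d})"
    by (rule compact_continuous_image) (use assms in \<open>auto intro: continuous_on_subset\<close>)
  hence "bounded (f ` {c..d})" by (rule compact_imp_bounded)
  then obtain B where "B > 0" "\<forall>y\<in>f ` {c..d}. norm y \<le> B" by (auto simp: bounded_pos)
  thus ?thesis using that by auto
qed

lemma coef_int:
  fixes V :: "real \<Rightarrow> real"
  assumes a: "continuous_on UNIV a" and m: "V \<in> borel_measurable lborel"
    and i: "integrable lborel (\<lambda>x. (V x)\<^sup>2)" and z: "\<And>x. x \<notin> {c..d} \<Longrightarrow> V x = 0"
  shows "integrable lborel (\<lambda>x. a x * (V x)\<^sup>2)"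
proof -
  obtain B where B: "B > 0" "\<And>x. x \<in> {c..d} \<Longrightarrow> \<bar>a x\<bar> \<le> B" using cont_bound[OF a] by blast
  have am: "a \<in> borel_measurable lborel" using a by (simp add: borel_measurable_continuous_onI)
  show ?thesis
  proof (rule Bochner_Integration.integrable_bound)
    show "integrable lborel (\<lambda>x. B * (V x)\<^sup>2)" using i by simp
    show "(\<lambda>x. a x * (V x)\<^sup>2) \<in> borel_measurable lborel" using am m by measurable
    show "AE x in lborel. norm (a x * (V x)\<^sup>2) \<le> norm (B * (V x)\<^sup>2)"
    proof (rule AE_I2)
      fix x show "norm (a x * (V x)\<^sup>2) \<le> norm (B * (V x)\<^sup>2)"
      proof (cases "x \<in> {c..d}")
        case True
        have "\<bar>a x\<bar> * (V x)\<^sup>2 \<le> B * (V x)\<^sup>2" using B(2)[OF True] by (rule mult_right_mono) simp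
        thus ?thesis using B by (simp add: abs_mult)
      next
        case False thus ?thesis using z by simp
      qed
    qed
  qed
qed

definition AI :: "(real \<Rightarrow> real) \<Rightarrow> real \<Rightarrow> (real \<Rightarrow> real) \<Rightarrow> real" where
  "AI a L v = (LINT x|lborel. a x * (indicator {-L..L} x * v x)\<^sup>2)"

definition GI :: "(real \<Rightarrow> real) \<Rightarrow> (real \<Rightarrow> real) \<Rightarrow> real \<Rightarrow> (real \<Rightarrow> real) \<Rightarrow> real" where
  "GI b G L u = (LINT x|lborel. indicator {-L..L} x * (G (u x) * b x))"

lemma wd_A_int:
  fixes a :: "real \<Rightarrow> real"
  assumes a: "continuous_on UNIV a" and w: "is_wderiv L u v"
  shows "integrable lborel (\<lambda>x. a x * (indicator {-L..L} x * v x)\<^sup>2)"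
  by (rule coef_int[OF a wd_meas[OF w] wd_sq_int[OF w], of "-L" L]) simp

lemma G_int:
  fixes b G u :: "real \<Rightarrow> real"
  assumes b: "continuous_on UNIV b" and G: "continuous_on UNIV G" and u: "continuous_on {-L..L} u"
  shows "integrable lborel (\<lambda>x. indicator {-L..L} x * (G (u x) * b x))"
proof -
  have "continuous_on {-L..L} (\<lambda>x. G (u x) * b x)"
  proof (rule continuous_on_mult')
    show "continuous_on {-L..L} (\<lambda>x. G (u x))" by (rule continuous_on_compose2[OF G u]) auto
    show "continuous_on {-L..L} b" by (rule continuous_on_subset[OF b]) auto
  qed
  hence "integrable lborel (\<lambda>x. indicator {-L..L} x *\<^sub>R (G (u x) * b x))"
    by (intro borel_integrable_compact) auto
  thus ?thesis by simp
qed

lemma energy_split: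
  fixes a b G u v :: "real \<Rightarrow> real"
  assumes a: "continuous_on UNIV a" and b: "continuous_on UNIV b" and G: "continuous_on UNIV G"
    and w: "is_wderiv L u v"
  shows "energy a b G L u v = AI a L v / 2 + GI b G L u"
proof -
  have i1: "integrable lborel (\<lambda>x. a x * (indicator {-L..L} x * v x)\<^sup>2 / 2)"
    using wd_A_int[OF a w] by simp
  have i2: "integrable lborel (\<lambda>x. indicator {-L..L} x * (G (u x) * b x))"
    by (rule G_int[OF b G wd_cont[OF w]])
  have "energy a b G L u v = (LINT x|lborel. a x * (indicator {-L..L} x * v x)\<^sup>2 / 2 + indicator {-L..L} x * (G (u x) * b x))"
    unfolding energy_def set_lebesgue_integral_def real_scaleR_def
    by (rule Bochner_Integration.integral_cong[OF refl]) (simp add: indicator_def power2_eq_square field_simps)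
  also have "\<dots> = (LINT x|lborel. a x * (indicator {-L..L} x * v x)\<^sup>2 / 2) + GI b G L u"
    unfolding GI_def by (rule Bochner_Integration.integral_add[OF i1 i2])
  also have "(LINT x|lborel. a x * (indicator {-L..L} x * v x)\<^sup>2 / 2) = AI a L v / 2"
    unfolding AI_def by (rule integral_divide_zero)
  finally show ?thesis .
qed

lemma int_ind_const: "p \<le> q \<Longrightarrow> (LINT t|lborel. indicator {p..q::real} t * k) = k * (q - p)"
proof -
  assume pq: "p \<le> q"
  have "(LINT t|lborel. indicator {p..q::real} t * k) = (LINT t|lborel. indicator {p..q::real} t) * k"
    by (rule integral_mult_left_zero)
  also have "(LINT t|lborel. indicator {p..q::real} t) = measure lborel {p..q}"
    by (simp only: Bochner_Integration.integral_indicator space_lborel space_borel Int_UNIV_right)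
  also have "\<dots> = q - p" using pq by (simp only: measure_lborel_Icc)
  finally show ?thesis by (simp only: mult.commute)
qed

lemma wd_shift:
  fixes w v :: "real \<Rightarrow> real"
  assumes w: "is_wderiv L w v" and L: "0 < L"
  shows "is_wderiv L (\<lambda>x. w x + d * x / L) (\<lambda>x. v x + d / L)"
  unfolding is_wderiv_def
proof (intro conjI ballI)
  have vm: "(\<lambda>x. indicator {-L..L} x * v x) \<in> borel_measurable lborel" by (rule wd_meas[OF w])
  have e1: "(\<lambda>x. indicator {-L..L} x *\<^sub>R (v x + d / L)) = (\<lambda>x. indicator {-L..L} x * v x + indicator {-L..L} x * (d/L))"
    by (auto simp: fun_eq_iff algebra_simps)
  show "set_borel_measurable lborel {-L..L} (\<lambda>x. v x + d / L)"
    unfolding set_borel_measurable_def e1 using vm by measurable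
  have e2: "(\<lambda>x. indicator {-L..L} x *\<^sub>R (v x + d / L)\<^sup>2) = (\<lambda>x. (indicator {-L..L} x * v x)\<^sup>2 + 2*(d/L) * (indicator {-L..L} x * v x) + indicator {-L..L} x * (d/L)\<^sup>2)"
    by (auto simp: fun_eq_iff algebra_simps indicator_def power2_eq_square)
  show "set_integrable lborel {-L..L} (\<lambda>x. (v x + d / L)\<^sup>2)"
    unfolding set_integrable_def e2
    using wd_sq_int[OF w] wd_int[OF w] ind_const_int
    by (intro Bochner_Integration.integrable_add integrable_mult_right) auto
  fix x assume x: "x \<in> {-L..L}"
  have ix: "integrable lborel (\<lambda>t. indicator {-L..x} t * v t)"
    using x by (intro wd_sub_int[OF w]) auto
  have "set_lebesgue_integral lborel {-L..x} (\<lambda>t. v t + d / L) = (LINT t|lborel. indicator {-L..x} t * v t + indicator {-L..x} t * (d/L))"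
    unfolding set_lebesgue_integral_def real_scaleR_def
    by (rule Bochner_Integration.integral_cong[OF refl]) (simp add: algebra_simps)
  also have "\<dots> = (LINT t|lborel. indicator {-L..x} t * v t) + (LINT t|lborel. indicator {-L..x} t * (d/L))"
    by (rule Bochner_Integration.integral_add[OF ix ind_const_int])
  also have "(LINT t|lborel. indicator {-L..x} t * (d/L)) = d/L * (x + L)"
    using x int_ind_const[of "-L" x "d/L"] by simp
  finally have *: "set_lebesgue_integral lborel {-L..x} (\<lambda>t. v t + d / L) = (LINT t|lborel. indicator {-L..x} t * v t) + d/L * (x + L)" .
  have "w x = w (-L) + (LINT t|lborel. indicator {-L..x} t * v t)" by (rule wd_eq[OF w x])
  thus "w x + d * x / L = w (- L) + d * - L / L + set_lebesgue_integral lborel {-L..x} (\<lambda>t. v t + d / L)"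
    unfolding * using L by (simp add: field_simps)
qed

lemma wd_zero: "0 < L \<Longrightarrow> is_wderiv L (\<lambda>x. 0) (\<lambda>x. 0)"
  unfolding is_wderiv_def set_borel_measurable_def set_integrable_def set_lebesgue_integral_def by simp

lemma H1m_shift:
  assumes "H1m L m w" "is_wderiv L w v" "0 < L"
  shows "H1m L (m + d) (\<lambda>x. w x + d * x / L)"
  using assms wd_shift[OF assms(2,3), of d] unfolding H1m_def H1_def by (auto simp: field_simps)

lemma prod_int:
  fixes V W :: "real \<Rightarrow> real"
  assumes "V \<in> borel_measurable lborel" "W \<in> borel_measurable lborel"
    "integrable lborel (\<lambda>x. (V x)\<^sup>2)" "integrable lborel (\<lambda>x. (W x)\<^sup>2)"
  shows "integrable lborel (\<lambda>x. V x * W x)"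
proof (rule Bochner_Integration.integrable_bound)
  show "integrable lborel (\<lambda>x. (V x)\<^sup>2 + (W x)\<^sup>2)" using assms by auto
  show "(\<lambda>x. V x * W x) \<in> borel_measurable lborel" using assms by measurable
  show "AE x in lborel. norm (V x * W x) \<le> norm ((V x)\<^sup>2 + (W x)\<^sup>2)"
  proof (rule AE_I2)
    fix x
    have "0 \<le> (\<bar>V x\<bar> - \<bar>W x\<bar>)\<^sup>2" by simp
    hence "2 * \<bar>V x\<bar> * \<bar>W x\<bar> \<le> (V x)\<^sup>2 + (W x)\<^sup>2" by (simp add: power2_eq_square algebra_simps)
    moreover have "0 \<le> \<bar>V x\<bar> * \<bar>W x\<bar>" by simp
    ultimately have "\<bar>V x\<bar> * \<bar>W x\<bar> \<le> (V x)\<^sup>2 + (W x)\<^sup>2" by linarith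
    thus "norm (V x * W x) \<le> norm ((V x)\<^sup>2 + (W x)\<^sup>2)" by (simp add: abs_mult)
  qed
qed

lemma wd_lin:
  fixes u1 u2 v1 v2 :: "real \<Rightarrow> real"
  assumes w1: "is_wderiv L u1 v1" and w2: "is_wderiv L u2 v2"
  shows "is_wderiv L (\<lambda>x. \<alpha> * u1 x + \<beta> * u2 x) (\<lambda>x. \<alpha> * v1 x + \<beta> * v2 x)"
  unfolding is_wderiv_def
proof (intro conjI ballI)
  have m1: "(\<lambda>x. indicator {-L..L} x * v1 x) \<in> borel_measurable lborel" by (rule wd_meas[OF w1])
  have m2: "(\<lambda>x. indicator {-L..L} x * v2 x) \<in> borel_measurable lborel" by (rule wd_meas[OF w2])
  have e1: "(\<lambda>x. indicator {-L..L} x *\<^sub>R (\<alpha> * v1 x + \<beta> * v2 x)) = (\<lambda>x. \<alpha> * (indicator {-L..L} x * v1 x) + \<beta> * (indicator {-L..L} x * v2 x))"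
    by (auto simp: fun_eq_iff algebra_simps)
  show "set_borel_measurable lborel {-L..L} (\<lambda>x. \<alpha> * v1 x + \<beta> * v2 x)"
    unfolding set_borel_measurable_def e1 using m1 m2 by measurable
  have e2: "(\<lambda>x. indicator {-L..L} x *\<^sub>R (\<alpha> * v1 x + \<beta> * v2 x)\<^sup>2) = (\<lambda>x. \<alpha>\<^sup>2 * (indicator {-L..L} x * v1 x)\<^sup>2 + 2*\<alpha>*\<beta> * ((indicator {-L..L} x * v1 x) * (indicator {-L..L} x * v2 x)) + \<beta>\<^sup>2 * (indicator {-L..L} x * v2 x)\<^sup>2)"
    by (auto simp: fun_eq_iff algebra_simps indicator_def power2_eq_square)
  show "set_integrable lborel {-L..L} (\<lambda>x. (\<alpha> * v1 x + \<beta> * v2 x)\<^sup>2)"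
    unfolding set_integrable_def e2
    using wd_sq_int[OF w1] wd_sq_int[OF w2] prod_int[OF m1 m2 wd_sq_int[OF w1] wd_sq_int[OF w2]]
    by (intro Bochner_Integration.integrable_add integrable_mult_right) auto
  fix x assume x: "x \<in> {-L..L}"
  have i1: "integrable lborel (\<lambda>t. indicator {-L..x} t * v1 t)"
    using x by (intro wd_sub_int[OF w1]) auto
  have i2: "integrable lborel (\<lambda>t. indicator {-L..x} t * v2 t)"
    using x by (intro wd_sub_int[OF w2]) auto
  have "set_lebesgue_integral lborel {-L..x} (\<lambda>t. \<alpha> * v1 t + \<beta> * v2 t) = (LINT t|lborel. \<alpha> * (indicator {-L..x} t * v1 t) + \<beta> * (indicator {-L..x} t * v2 t))"
    unfolding set_lebesgue_integral_def real_scaleR_def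
    by (rule Bochner_Integration.integral_cong[OF refl]) (simp add: algebra_simps)
  also have "\<dots> = \<alpha> * (LINT t|lborel. indicator {-L..x} t * v1 t) + \<beta> * (LINT t|lborel. indicator {-L..x} t * v2 t)"
    using i1 i2 by simp
  finally have *: "set_lebesgue_integral lborel {-L..x} (\<lambda>t. \<alpha> * v1 t + \<beta> * v2 t) = \<alpha> * (LINT t|lborel. indicator {-L..x} t * v1 t) + \<beta> * (LINT t|lborel. indicator {-L..x} t * v2 t)" .
  show "\<alpha> * u1 x + \<beta> * u2 x = \<alpha> * u1 (- L) + \<beta> * u2 (- L) + set_lebesgue_integral lborel {-L..x} (\<lambda>t. \<alpha> * v1 t + \<beta> * v2 t)"
    unfolding * wd_eq[OF w1 x] wd_eq[OF w2 x] by (simp add: algebra_simps)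
qed

lemma ind_int_sq: "integrable lborel (\<lambda>x. (indicator {-L..L::real} x * (1::real))\<^sup>2)"
proof -
  have "(\<lambda>x. (indicator {-L..L::real} x * (1::real))\<^sup>2) = (\<lambda>x. indicator {-L..L::real} x * (1::real))"
    by (auto simp: indicator_def fun_eq_iff)
  thus ?thesis using ind_const_int[of "-L" L 1] by simp
qed

lemma AI_one_int:
  fixes a :: "real \<Rightarrow> real"
  assumes a: "continuous_on UNIV a"
  shows "integrable lborel (\<lambda>x. a x * (indicator {-L..L::real} x * 1)\<^sup>2)"
proof (rule coef_int[OF a, of "\<lambda>x. indicator {-L..L} x * 1" "-L" L])
  show "integrable lborel (\<lambda>x. (indicator {-L..L::real} x * (1::real))\<^sup>2)" by (rule ind_int_sq)
qed auto

lemma mid_ineq: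
  fixes a b G u1 u2 v1 v2 :: "real \<Rightarrow> real"
  assumes a: "continuous_on UNIV a" and b: "continuous_on UNIV b" and G: "continuous_on UNIV G"
    and L: "0 < L"
    and mn1: "minimizer a b G L m1 u1" and mn2: "minimizer a b G L m2 u2"
    and w1: "is_wderiv L u1 v1" and w2: "is_wderiv L u2 v2"
  shows "AI a L (\<lambda>x. v1 x - v2 x) / 4 \<le> ((m1-m2)/(2*L))\<^sup>2 * AI a L (\<lambda>x. 1)
     + GI b G L (\<lambda>x. 1/2 * u1 x + 1/2 * u2 x + ((m1-m2)/2) * x / L)
     + GI b G L (\<lambda>x. 1/2 * u1 x + 1/2 * u2 x + (-((m1-m2)/2)) * x / L)
     - GI b G L u1 - GI b G L u2"
proof -
  define c where "c = (m1-m2)/2"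
  define wA where "wA = (\<lambda>x. 1/2 * u1 x + 1/2 * u2 x + c * x / L)"
  define wB where "wB = (\<lambda>x. 1/2 * u1 x + 1/2 * u2 x + (-c) * x / L)"
  define vA where "vA = (\<lambda>x. 1/2 * v1 x + 1/2 * v2 x + c / L)"
  define vB where "vB = (\<lambda>x. 1/2 * v1 x + 1/2 * v2 x + (-c) / L)"
  have ws: "is_wderiv L (\<lambda>x. 1/2 * u1 x + 1/2 * u2 x) (\<lambda>x. 1/2 * v1 x + 1/2 * v2 x)"
    by (rule wd_lin[OF w1 w2])
  have wdA: "is_wderiv L wA vA" unfolding wA_def vA_def by (rule wd_shift[OF ws L])
  have wdB: "is_wderiv L wB vB" unfolding wB_def vB_def by (rule wd_shift[OF ws L])
  have h1: "H1m L m1 u1" "H1m L m2 u2" using mn1 mn2 unfolding minimizer_def by auto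
  have hs: "H1m L ((m1+m2)/2) (\<lambda>x. 1/2 * u1 x + 1/2 * u2 x)"
    using h1 ws unfolding H1m_def H1_def by (auto simp: field_simps)
  have hA: "H1m L m1 wA"
    using H1m_shift[OF hs ws L, of c] unfolding wA_def c_def by (simp add: field_simps)
  have hB: "H1m L m2 wB"
    using H1m_shift[OF hs ws L, of "-c"] unfolding wB_def c_def by (simp add: field_simps)
  have "energy a b G L u1 v1 \<le> energy a b G L wA vA"
    using mn1 hA w1 wdA unfolding minimizer_def by blast
  hence i1: "AI a L v1 / 2 + GI b G L u1 \<le> AI a L vA / 2 + GI b G L wA"
    using energy_split[OF a b G w1] energy_split[OF a b G wdA] by simp
  have "energy a b G L u2 v2 \<le> energy a b G L wB vB"
    using mn2 hB w2 wdB unfolding minimizer_def by blast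
  hence i2: "AI a L v2 / 2 + GI b G L u2 \<le> AI a L vB / 2 + GI b G L wB"
    using energy_split[OF a b G w2] energy_split[OF a b G wdB] by simp
  have wd12: "is_wderiv L (\<lambda>x. 1 * u1 x + (-1) * u2 x) (\<lambda>x. 1 * v1 x + (-1) * v2 x)"
    by (rule wd_lin[OF w1 w2])
  define p where "p = c / L"
  let ?I = "indicator {-L..L} :: real \<Rightarrow> real"
  have fA: "integrable lborel (\<lambda>x. a x * (?I x * vA x)\<^sup>2)" by (rule wd_A_int[OF a wdA])
  have fB: "integrable lborel (\<lambda>x. a x * (?I x * vB x)\<^sup>2)" by (rule wd_A_int[OF a wdB])
  have g1: "integrable lborel (\<lambda>x. a x * (?I x * v1 x)\<^sup>2)" by (rule wd_A_int[OF a w1])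
  have g2: "integrable lborel (\<lambda>x. a x * (?I x * v2 x)\<^sup>2)" by (rule wd_A_int[OF a w2])
  have g3: "integrable lborel (\<lambda>x. a x * (?I x * (1 * v1 x + (-1) * v2 x))\<^sup>2)" by (rule wd_A_int[OF a wd12])
  have g4: "integrable lborel (\<lambda>x. a x * (?I x * 1)\<^sup>2)" by (rule AI_one_int[OF a])
  have pw: "a x * (?I x * vA x)\<^sup>2 + a x * (?I x * vB x)\<^sup>2 =
     a x * (?I x * v1 x)\<^sup>2 + a x * (?I x * v2 x)\<^sup>2 - a x * (?I x * (1 * v1 x + (-1) * v2 x))\<^sup>2 / 2
     + 2 * p\<^sup>2 * (a x * (?I x * 1)\<^sup>2)" for x
  proof -
    have vAp: "vA x = 1/2 * v1 x + 1/2 * v2 x + p" "vB x = 1/2 * v1 x + 1/2 * v2 x - p"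
      unfolding vA_def vB_def p_def by simp_all
    show ?thesis unfolding vAp by (cases "x \<in> {-L..L}") (simp_all add: power2_eq_square field_simps)
  qed
  have "AI a L vA + AI a L vB = (LINT x|lborel. a x * (?I x * vA x)\<^sup>2 + a x * (?I x * vB x)\<^sup>2)"
    unfolding AI_def by (rule Bochner_Integration.integral_add[OF fA fB, symmetric])
  also have "\<dots> = (LINT x|lborel. (a x * (?I x * v1 x)\<^sup>2 + a x * (?I x * v2 x)\<^sup>2 - a x * (?I x * (1 * v1 x + (-1) * v2 x))\<^sup>2 / 2)
     + 2 * p\<^sup>2 * (a x * (?I x * 1)\<^sup>2))"
    by (simp only: pw)
  also have "\<dots> = (LINT x|lborel. a x * (?I x * v1 x)\<^sup>2 + a x * (?I x * v2 x)\<^sup>2 - a x * (?I x * (1 * v1 x + (-1) * v2 x))\<^sup>2 / 2)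
     + (LINT x|lborel. 2 * p\<^sup>2 * (a x * (?I x * 1)\<^sup>2))"
    by (rule Bochner_Integration.integral_add) (use g1 g2 g3 g4 in auto)
  also have "(LINT x|lborel. 2 * p\<^sup>2 * (a x * (?I x * 1)\<^sup>2)) = 2 * p\<^sup>2 * AI a L (\<lambda>x. 1)"
    unfolding AI_def by (rule integral_mult_right_zero)
  also have "(LINT x|lborel. a x * (?I x * v1 x)\<^sup>2 + a x * (?I x * v2 x)\<^sup>2 - a x * (?I x * (1 * v1 x + (-1) * v2 x))\<^sup>2 / 2)
      = (LINT x|lborel. a x * (?I x * v1 x)\<^sup>2 + a x * (?I x * v2 x)\<^sup>2) - (LINT x|lborel. a x * (?I x * (1 * v1 x + (-1) * v2 x))\<^sup>2 / 2)"
    by (rule Bochner_Integration.integral_diff) (use g1 g2 g3 in auto)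
  also have "(LINT x|lborel. a x * (?I x * v1 x)\<^sup>2 + a x * (?I x * v2 x)\<^sup>2) = AI a L v1 + AI a L v2"
    unfolding AI_def by (rule Bochner_Integration.integral_add[OF g1 g2])
  also have "(LINT x|lborel. a x * (?I x * (1 * v1 x + (-1) * v2 x))\<^sup>2 / 2) = AI a L (\<lambda>x. v1 x - v2 x) / 2"
    unfolding AI_def by (subst integral_divide_zero) simp
  finally have id: "AI a L vA + AI a L vB = AI a L v1 + AI a L v2 - AI a L (\<lambda>x. v1 x - v2 x) / 2 + 2 * p\<^sup>2 * AI a L (\<lambda>x. 1)" .
  have pp: "p\<^sup>2 = ((m1-m2)/(2*L))\<^sup>2" unfolding p_def c_def by (simp add: field_simps)
  show ?thesis
    using i1 i2 id pp unfolding wA_def[symmetric] wB_def[symmetric] c_def[symmetric] by (simp add: field_simps)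
qed



lemma sq_diff_int:
  fixes f g :: "real \<Rightarrow> real"
  assumes "f \<in> borel_measurable lborel" "g \<in> borel_measurable lborel"
    "integrable lborel (\<lambda>x. (f x)\<^sup>2)" "integrable lborel (\<lambda>x. (g x)\<^sup>2)"
  shows "integrable lborel (\<lambda>x. (f x - g x)\<^sup>2)"
proof -
  have "(\<lambda>x. (f x - g x)\<^sup>2) = (\<lambda>x. (f x)\<^sup>2 - 2 * (f x * g x) + (g x)\<^sup>2)"
    by (auto simp: fun_eq_iff power2_eq_square algebra_simps)
  thus ?thesis using prod_int[OF assms] assms(3,4) by simp
qed

lemma RF:
  fixes f :: "nat \<Rightarrow> real \<Rightarrow> real"
  assumes m: "\<And>n. f n \<in> borel_measurable lborel"
    and sq: "\<And>n. integrable lborel (\<lambda>x. (f n x)\<^sup>2)"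
    and z: "\<And>n x. x \<notin> {c..d} \<Longrightarrow> f n x = 0"
    and cd: "c \<le> d"
    and C: "\<And>e. e > 0 \<Longrightarrow> \<exists>N. \<forall>i\<ge>N. \<forall>j\<ge>N. (LINT x|lborel. (f i x - f j x)\<^sup>2) < e"
  obtains r v where "strict_mono r" "v \<in> borel_measurable lborel" "integrable lborel (\<lambda>x. (v x)\<^sup>2)"
    "\<And>x. x \<notin> {c..d} \<Longrightarrow> v x = 0" "(\<lambda>n. LINT x|lborel. (f (r n) x - v x)\<^sup>2) \<longlonglongrightarrow> 0"
proof -
  have fi: "integrable lborel (f n)" for n
    by (rule sq_int_imp_int[OF m sq z])
  have dsq: "integrable lborel (\<lambda>x. (f i x - f j x)\<^sup>2)" for i j
    by (rule sq_diff_int[OF m m sq sq])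
  have L1: "\<exists>N. \<forall>i\<ge>N. \<forall>j\<ge>N. (LINT x|lborel. norm (f i x - f j x)) < e" if e: "e > 0" for e
  proof -
    define t where "t = e / (d - c + 1)"
    have t: "0 < t" using e cd by (simp add: t_def)
    obtain N where N: "\<forall>i\<ge>N. \<forall>j\<ge>N. (LINT x|lborel. (f i x - f j x)\<^sup>2) < e * t"
      using C[of "e*t"] e t by auto
    show ?thesis
    proof (intro exI allI impI)
      fix i j assume ij: "N \<le> i" "N \<le> j"
      have "(LINT x|lborel. norm (f i x - f j x)) \<le> (LINT x|lborel. (f i x - f j x)\<^sup>2 / (2*t) + indicator {c..d} x * (t/2))"
      proof (rule integral_mono)
        show "integrable lborel (\<lambda>x. norm (f i x - f j x))" using fi by auto
        show "integrable lborel (\<lambda>x. (f i x - f j x)\<^sup>2 / (2*t) + indicator {c..d} x * (t/2))"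
          using dsq[of i j] ind_const_int[of c d "t/2"] by (intro Bochner_Integration.integrable_add integrable_divide) auto
        fix x show "norm (f i x - f j x) \<le> (f i x - f j x)\<^sup>2 / (2*t) + indicator {c..d} x * (t/2)"
          using amgm_abs[OF t, of "f i x - f j x"] z[of x i] z[of x j] t by (cases "x \<in> {c..d}") auto
      qed
      also have "\<dots> = (LINT x|lborel. (f i x - f j x)\<^sup>2) / (2*t) + t/2 * (d - c)"
      proof -
        have "(LINT x|lborel. (f i x - f j x)\<^sup>2 / (2*t) + indicator {c..d} x * (t/2)) =
              (LINT x|lborel. (f i x - f j x)\<^sup>2 / (2*t)) + (LINT x|lborel. indicator {c..d} x * (t/2))"
          by (rule Bochner_Integration.integral_add) (use dsq[of i j] ind_const_int[of c d "t/2"] in auto)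
        also have "(LINT x|lborel. indicator {c..d} x * (t/2)) = t/2 * (d - c)" by (rule int_ind_const[OF cd])
        also have "(LINT x|lborel. (f i x - f j x)\<^sup>2 / (2*t)) = (LINT x|lborel. (f i x - f j x)\<^sup>2) / (2*t)"
          by (rule integral_divide_zero)
        finally show ?thesis .
      qed
      also have "\<dots> < e"
      proof -
        have "(LINT x|lborel. (f i x - f j x)\<^sup>2) / (2*t) < e * t / (2*t)"
          using N ij t by (intro divide_strict_right_mono) auto
        also have "e * t / (2*t) = e/2" using t by simp
        finally have a: "(LINT x|lborel. (f i x - f j x)\<^sup>2) / (2*t) < e/2" .
        have "t * (d - c) < e" using e cd unfolding t_def by (simp add: field_simps)
        hence "t/2 * (d - c) < e/2" by simp
        thus ?thesis using a by simp
      qed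
      finally show "(LINT x|lborel. norm (f i x - f j x)) < e" .
    qed
  qed
  obtain r where r: "strict_mono r" and ae: "AE x in lborel. Cauchy (\<lambda>i. f (r i) x)"
    using cauchy_L1_AE_cauchy_subseq[OF fi L1] by blast
  define v where "v x = lim (\<lambda>i. f (r i) x)" for x
  have vm: "v \<in> borel_measurable lborel" unfolding v_def using m by measurable
  have vz: "v x = 0" if "x \<notin> {c..d}" for x
    unfolding v_def using z[OF that] by simp
  have conv: "AE x in lborel. (\<lambda>i. f (r i) x) \<longlonglongrightarrow> v x"
    using ae by eventually_elim (simp add: v_def Cauchy_convergent_iff convergent_LIMSEQ_iff)
  have key: "\<exists>N. \<forall>n\<ge>N. integrable lborel (\<lambda>x. (f (r n) x - v x)\<^sup>2) \<and> (LINT x|lborel. (f (r n) x - v x)\<^sup>2) \<le> e"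
    if e: "e > 0" for e
  proof -
    obtain N where N: "\<forall>i\<ge>N. \<forall>j\<ge>N. (LINT x|lborel. (f i x - f j x)\<^sup>2) < e" using C[OF e] by blast
    show ?thesis
    proof (intro exI allI impI)
      fix n assume n: "N \<le> n"
      have rn: "N \<le> r n" using n seq_suble[OF r, of n] by simp
      have mv: "(\<lambda>x. (f (r n) x - v x)\<^sup>2) \<in> borel_measurable lborel" using m vm by measurable
      have "(\<integral>\<^sup>+x. ennreal ((f (r n) x - v x)\<^sup>2) \<partial>lborel) = (\<integral>\<^sup>+x. liminf (\<lambda>j. ennreal ((f (r n) x - f (r j) x)\<^sup>2)) \<partial>lborel)"
      proof (rule nn_integral_cong_AE)
        show "AE x in lborel. ennreal ((f (r n) x - v x)\<^sup>2) = liminf (\<lambda>j. ennreal ((f (r n) x - f (r j) x)\<^sup>2))"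
          using conv
        proof eventually_elim
          case (elim x)
          have "(\<lambda>j. ennreal ((f (r n) x - f (r j) x)\<^sup>2)) \<longlonglongrightarrow> ennreal ((f (r n) x - v x)\<^sup>2)"
            by (intro tendsto_ennrealI tendsto_intros elim)
          from lim_imp_Liminf[OF _ this] show ?case by simp
        qed
      qed
      also have "\<dots> \<le> liminf (\<lambda>j. \<integral>\<^sup>+x. ennreal ((f (r n) x - f (r j) x)\<^sup>2) \<partial>lborel)"
        by (rule nn_integral_liminf) (use m in measurable)
      also have "\<dots> \<le> limsup (\<lambda>j. \<integral>\<^sup>+x. ennreal ((f (r n) x - f (r j) x)\<^sup>2) \<partial>lborel)"
        by (rule Liminf_le_Limsup) simp
      also have "\<dots> \<le> ennreal e"
      proof (rule Limsup_bounded)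
        show "\<forall>\<^sub>F j in sequentially. (\<integral>\<^sup>+x. ennreal ((f (r n) x - f (r j) x)\<^sup>2) \<partial>lborel) \<le> ennreal e"
        proof (rule eventually_sequentiallyI[of N])
          fix j assume j: "N \<le> j"
          have rj: "N \<le> r j" using j seq_suble[OF r, of j] by simp
          have "(\<integral>\<^sup>+x. ennreal ((f (r n) x - f (r j) x)\<^sup>2) \<partial>lborel) = ennreal (LINT x|lborel. (f (r n) x - f (r j) x)\<^sup>2)"
            by (rule nn_integral_eq_integral[OF dsq]) simp
          also have "\<dots> \<le> ennreal e"
          proof (rule ennreal_leI)
            show "(LINT x|lborel. (f (r n) x - f (r j) x)\<^sup>2) \<le> e" using N rn rj by (meson less_imp_le)
          qed
          finally show "(\<integral>\<^sup>+x. ennreal ((f (r n) x - f (r j) x)\<^sup>2) \<partial>lborel) \<le> ennreal e" .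
        qed
      qed
      finally have fin: "(\<integral>\<^sup>+x. ennreal ((f (r n) x - v x)\<^sup>2) \<partial>lborel) \<le> ennreal e" .
      have ii: "integrable lborel (\<lambda>x. (f (r n) x - v x)\<^sup>2)"
      proof (rule integrableI_bounded)
        show "(\<lambda>x. (f (r n) x - v x)\<^sup>2) \<in> borel_measurable lborel" by (rule mv)
        have "(\<integral>\<^sup>+x. ennreal (norm ((f (r n) x - v x)\<^sup>2)) \<partial>lborel) = (\<integral>\<^sup>+x. ennreal ((f (r n) x - v x)\<^sup>2) \<partial>lborel)"
          by simp
        also have "\<dots> < \<infinity>" using fin by (simp add: le_less_trans)
        finally show "(\<integral>\<^sup>+x. ennreal (norm ((f (r n) x - v x)\<^sup>2)) \<partial>lborel) < \<infinity>" .
      qed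
      have "ennreal (LINT x|lborel. (f (r n) x - v x)\<^sup>2) = (\<integral>\<^sup>+x. ennreal ((f (r n) x - v x)\<^sup>2) \<partial>lborel)"
        by (rule nn_integral_eq_integral[OF ii, symmetric]) simp
      hence "ennreal (LINT x|lborel. (f (r n) x - v x)\<^sup>2) \<le> ennreal e" using fin by simp
      hence "(LINT x|lborel. (f (r n) x - v x)\<^sup>2) \<le> e" using e by (simp add: ennreal_le_iff)
      thus "integrable lborel (\<lambda>x. (f (r n) x - v x)\<^sup>2) \<and> (LINT x|lborel. (f (r n) x - v x)\<^sup>2) \<le> e"
        using ii by simp
    qed
  qed
  obtain N0 where N0: "integrable lborel (\<lambda>x. (f (r N0) x - v x)\<^sup>2)" using key[of 1] by auto
  have vsq: "integrable lborel (\<lambda>x. (v x)\<^sup>2)"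
  proof (rule Bochner_Integration.integrable_bound)
    show "integrable lborel (\<lambda>x. 2 * (f (r N0) x)\<^sup>2 + 2 * (f (r N0) x - v x)\<^sup>2)"
      using sq N0 by auto
    show "(\<lambda>x. (v x)\<^sup>2) \<in> borel_measurable lborel" using vm by measurable
    show "AE x in lborel. norm ((v x)\<^sup>2) \<le> norm (2 * (f (r N0) x)\<^sup>2 + 2 * (f (r N0) x - v x)\<^sup>2)"
    proof (rule AE_I2)
      fix x
      have "0 \<le> (2 * f (r N0) x - v x)\<^sup>2" by simp
      hence "(v x)\<^sup>2 \<le> 2 * (f (r N0) x)\<^sup>2 + 2 * (f (r N0) x - v x)\<^sup>2"
        by (simp add: power2_eq_square algebra_simps)
      thus "norm ((v x)\<^sup>2) \<le> norm (2 * (f (r N0) x)\<^sup>2 + 2 * (f (r N0) x - v x)\<^sup>2)" by simp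
    qed
  qed
  have lim: "(\<lambda>n. LINT x|lborel. (f (r n) x - v x)\<^sup>2) \<longlonglongrightarrow> 0"
  proof (rule LIMSEQ_I)
    fix e :: real assume e: "0 < e"
    obtain N where N: "\<forall>n\<ge>N. integrable lborel (\<lambda>x. (f (r n) x - v x)\<^sup>2) \<and> (LINT x|lborel. (f (r n) x - v x)\<^sup>2) \<le> e/2"
      using key[of "e/2"] e by auto
    show "\<exists>no. \<forall>n\<ge>no. norm ((LINT x|lborel. (f (r n) x - v x)\<^sup>2) - 0) < e"
    proof (intro exI allI impI)
      fix n assume "N \<le> n"
      hence "(LINT x|lborel. (f (r n) x - v x)\<^sup>2) \<le> e/2" using N by auto
      moreover have "0 \<le> (LINT x|lborel. (f (r n) x - v x)\<^sup>2)" by (rule Bochner_Integration.integral_nonneg) simp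
      ultimately show "norm ((LINT x|lborel. (f (r n) x - v x)\<^sup>2) - 0) < e" using e by simp
    qed
  qed
  show ?thesis using that[OF r vm vsq vz lim] .
qed



lemma prod_bound:
  fixes f g :: "real \<Rightarrow> real"
  assumes m: "f \<in> borel_measurable lborel" "g \<in> borel_measurable lborel"
    and i: "integrable lborel (\<lambda>x. (f x)\<^sup>2)" "integrable lborel (\<lambda>x. (g x)\<^sup>2)" and t: "0 < t"
  shows "(LINT x|lborel. \<bar>f x * g x\<bar>) \<le> t/2 * (LINT x|lborel. (f x)\<^sup>2) + (LINT x|lborel. (g x)\<^sup>2) / (2*t)"
proof -
  have "(LINT x|lborel. \<bar>f x * g x\<bar>) \<le> (LINT x|lborel. t/2 * (f x)\<^sup>2 + (g x)\<^sup>2 / (2*t))"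
  proof (rule integral_mono)
    show "integrable lborel (\<lambda>x. \<bar>f x * g x\<bar>)" using prod_int[OF m i] by auto
    show "integrable lborel (\<lambda>x. t/2 * (f x)\<^sup>2 + (g x)\<^sup>2 / (2*t))" using i by auto
    fix x
    have "0 \<le> (t * \<bar>f x\<bar> - \<bar>g x\<bar>)\<^sup>2 / (2*t)" using t by simp
    also have "(t * \<bar>f x\<bar> - \<bar>g x\<bar>)\<^sup>2 / (2*t) = t/2 * (f x)\<^sup>2 + (g x)\<^sup>2 / (2*t) - \<bar>f x * g x\<bar>"
      using t by (simp add: power2_eq_square field_simps abs_mult)
    finally show "\<bar>f x * g x\<bar> \<le> t/2 * (f x)\<^sup>2 + (g x)\<^sup>2 / (2*t)" by simp
  qed
  also have "\<dots> = t/2 * (LINT x|lborel. (f x)\<^sup>2) + (LINT x|lborel. (g x)\<^sup>2) / (2*t)"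
  proof -
    have "(LINT x|lborel. t/2 * (f x)\<^sup>2 + (g x)\<^sup>2 / (2*t)) = (LINT x|lborel. t/2 * (f x)\<^sup>2) + (LINT x|lborel. (g x)\<^sup>2 / (2*t))"
      by (rule Bochner_Integration.integral_add) (use i in auto)
    also have "(LINT x|lborel. t/2 * (f x)\<^sup>2) = t/2 * (LINT x|lborel. (f x)\<^sup>2)" by (rule integral_mult_right_zero)
    also have "(LINT x|lborel. (g x)\<^sup>2 / (2*t)) = (LINT x|lborel. (g x)\<^sup>2) / (2*t)" by (rule integral_divide_zero)
    finally show ?thesis .
  qed
  finally show ?thesis .
qed

lemma CS_int:
  fixes f g :: "real \<Rightarrow> real"
  assumes m: "f \<in> borel_measurable lborel" "g \<in> borel_measurable lborel"
    and i: "integrable lborel (\<lambda>x. (f x)\<^sup>2)" "integrable lborel (\<lambda>x. (g x)\<^sup>2)"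
  shows "(LINT x|lborel. \<bar>f x * g x\<bar>) \<le> sqrt (LINT x|lborel. (f x)\<^sup>2) * sqrt (LINT x|lborel. (g x)\<^sup>2)"
proof -
  define A where "A = (LINT x|lborel. (f x)\<^sup>2)"
  define B where "B = (LINT x|lborel. (g x)\<^sup>2)"
  define X where "X = (LINT x|lborel. \<bar>f x * g x\<bar>)"
  have A0: "0 \<le> A" unfolding A_def by (rule Bochner_Integration.integral_nonneg) simp
  have B0: "0 \<le> B" unfolding B_def by (rule Bochner_Integration.integral_nonneg) simp
  have X0: "0 \<le> X" unfolding X_def by (rule Bochner_Integration.integral_nonneg) simp
  have pb: "X \<le> t/2 * A + B/(2*t)" if "0 < t" for t
    unfolding X_def A_def B_def by (rule prod_bound[OF m i that])
  have pb2: "X \<le> t/2 * B + A/(2*t)" if "0 < t" for t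
  proof -
    have "X = (LINT x|lborel. \<bar>g x * f x\<bar>)" unfolding X_def by (simp add: mult.commute)
    also have "\<dots> \<le> t/2 * B + A/(2*t)" unfolding A_def B_def by (rule prod_bound[OF m(2,1) i(2,1) that])
    finally show ?thesis .
  qed
  show ?thesis
  proof (cases "A > 0 \<and> B > 0")
    case True
    define t where "t = sqrt B / sqrt A"
    have t: "0 < t" using True by (simp add: t_def)
    have sA: "sqrt A * sqrt A = A" using A0 by simp
    have sB: "sqrt B * sqrt B = B" using B0 by simp
    have pA: "0 < sqrt A" "0 < sqrt B" using True by auto
    have "X \<le> t/2 * A + B/(2*t)" by (rule pb[OF t])
    also have "t/2 * A = sqrt A * sqrt B / 2"
    proof -
      have "t/2 * A = sqrt B / sqrt A / 2 * (sqrt A * sqrt A)" unfolding sA t_def ..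
      also have "\<dots> = sqrt A * sqrt B / 2" using pA by (simp add: field_simps)
      finally show ?thesis .
    qed
    also have "B/(2*t) = sqrt A * sqrt B / 2"
    proof -
      have "B/(2*t) = (sqrt B * sqrt B) / (2 * (sqrt B / sqrt A))" unfolding sB t_def ..
      also have "\<dots> = sqrt A * sqrt B / 2" using pA by (simp add: field_simps)
      finally show ?thesis .
    qed
    finally show ?thesis unfolding X_def[symmetric] A_def[symmetric] B_def[symmetric] by simp
  next
    case False
    hence "A = 0 \<or> B = 0" using A0 B0 by auto
    hence "X \<le> 0"
    proof
      assume A: "A = 0"
      show "X \<le> 0"
      proof (rule ccontr)
        assume "\<not> X \<le> 0" hence Xp: "X > 0" by simp
        define t where "t = (B + 1) / X"
        have t: "0 < t" using Xp B0 by (simp add: t_def)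
        have "X \<le> B/(2*t)" using pb[OF t] A by simp
        also have "B/(2*t) = B * X / (2*(B+1))" using Xp B0 by (simp add: t_def field_simps)
        also have "\<dots> < X" using mult_pos_pos[OF Xp, of "B+2"] B0 by (simp add: divide_less_eq algebra_simps)
        finally show False by simp
      qed
    next
      assume B: "B = 0"
      show "X \<le> 0"
      proof (rule ccontr)
        assume "\<not> X \<le> 0" hence Xp: "X > 0" by simp
        define t where "t = (A + 1) / X"
        have t: "0 < t" using Xp A0 by (simp add: t_def)
        have "X \<le> A/(2*t)" using pb2[OF t] B by simp
        also have "A/(2*t) = A * X / (2*(A+1))" using Xp A0 by (simp add: t_def field_simps)
        also have "\<dots> < X" using mult_pos_pos[OF Xp, of "A+2"] A0 by (simp add: divide_less_eq algebra_simps)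
        finally show False by simp
      qed
    qed
    moreover have "0 \<le> sqrt A * sqrt B" using A0 B0 by simp
    ultimately show ?thesis unfolding X_def[symmetric] A_def[symmetric] B_def[symmetric] by linarith
  qed
qed



lemma coef_int1:
  fixes V a :: "real \<Rightarrow> real"
  assumes a: "continuous_on UNIV a" and i: "integrable lborel V" and z: "\<And>x. x \<notin> {c..d} \<Longrightarrow> V x = 0"
  shows "integrable lborel (\<lambda>x. a x * V x)"
proof -
  obtain B where B: "B > 0" "\<And>x. x \<in> {c..d} \<Longrightarrow> \<bar>a x\<bar> \<le> B" using cont_bound[OF a] by blast
  have am: "a \<in> borel_measurable lborel" using a by (simp add: borel_measurable_continuous_onI)
  have m: "V \<in> borel_measurable lborel" using i by auto
  show ?thesis
  proof (rule Bochner_Integration.integrable_bound)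
    show "integrable lborel (\<lambda>x. B * \<bar>V x\<bar>)" using i by auto
    show "(\<lambda>x. a x * V x) \<in> borel_measurable lborel" using am m by measurable
    show "AE x in lborel. norm (a x * V x) \<le> norm (B * \<bar>V x\<bar>)"
    proof (rule AE_I2)
      fix x show "norm (a x * V x) \<le> norm (B * \<bar>V x\<bar>)"
      proof (cases "x \<in> {c..d}")
        case True
        have "\<bar>a x\<bar> * \<bar>V x\<bar> \<le> B * \<bar>V x\<bar>" using B(2)[OF True] by (rule mult_right_mono) simp
        thus ?thesis using B by (simp add: abs_mult)
      next
        case False thus ?thesis using z by simp
      qed
    qed
  qed
qed

lemma AI_cong:
  fixes a :: "real \<Rightarrow> real"
  assumes a: "continuous_on UNIV a" and w1: "is_wderiv L u v1" and w2: "is_wderiv L u v2" and L: "0 < L"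
  shows "AI a L v1 = AI a L v2"
  unfolding AI_def
proof (rule integral_cong_AE)
  have am: "a \<in> borel_measurable lborel" using a by (simp add: borel_measurable_continuous_onI)
  show "(\<lambda>x. a x * (indicator {- L..L} x * v1 x)\<^sup>2) \<in> borel_measurable lborel"
    using am wd_meas[OF w1] by measurable
  show "(\<lambda>x. a x * (indicator {- L..L} x * v2 x)\<^sup>2) \<in> borel_measurable lborel"
    using am wd_meas[OF w2] by measurable
  show "AE x in lborel. a x * (indicator {- L..L} x * v1 x)\<^sup>2 = a x * (indicator {- L..L} x * v2 x)\<^sup>2"
    using wd_unique[OF w1 w2 L] by eventually_elim (simp only:)
qed

lemma GI_close:
  fixes b G h g :: "real \<Rightarrow> real"
  assumes b: "continuous_on UNIV b" and G: "continuous_on UNIV G"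
    and h: "continuous_on {-L..L} h" and g: "continuous_on {-L..L} g" and L: "0 < L"
    and B: "\<And>x. x \<in> {-L..L} \<Longrightarrow> \<bar>b x\<bar> \<le> B"
    and e: "\<And>x. x \<in> {-L..L} \<Longrightarrow> \<bar>G (h x) - G (g x)\<bar> \<le> \<epsilon>"
  shows "\<bar>GI b G L h - GI b G L g\<bar> \<le> \<epsilon> * B * (2*L)"
proof -
  have ih: "integrable lborel (\<lambda>x. indicator {-L..L} x * (G (h x) * b x))" by (rule G_int[OF b G h])
  have ig: "integrable lborel (\<lambda>x. indicator {-L..L} x * (G (g x) * b x))" by (rule G_int[OF b G g])
  have "GI b G L h - GI b G L g = (LINT x|lborel. indicator {-L..L} x * (G (h x) * b x) - indicator {-L..L} x * (G (g x) * b x))"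
    unfolding GI_def by (rule Bochner_Integration.integral_diff[OF ih ig, symmetric])
  hence "\<bar>GI b G L h - GI b G L g\<bar> \<le> (LINT x|lborel. \<bar>indicator {-L..L} x * (G (h x) * b x) - indicator {-L..L} x * (G (g x) * b x)\<bar>)"
    by (simp only: integral_abs_bound)
  also have "\<dots> \<le> (LINT x|lborel. indicator {-L..L} x * (\<epsilon> * B))"
  proof (rule integral_mono)
    show "integrable lborel (\<lambda>x. \<bar>indicator {-L..L} x * (G (h x) * b x) - indicator {-L..L} x * (G (g x) * b x)\<bar>)"
      using ih ig by auto
    show "integrable lborel (\<lambda>x. indicator {-L..L} x * (\<epsilon> * B))" by (rule ind_const_int)
    fix x show "\<bar>indicator {-L..L} x * (G (h x) * b x) - indicator {-L..L} x * (G (g x) * b x)\<bar> \<le> indicator {-L..L} x * (\<epsilon> * B)"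
    proof (cases "x \<in> {-L..L}")
      case True
      have "\<bar>G (h x) * b x - G (g x) * b x\<bar> = \<bar>G (h x) - G (g x)\<bar> * \<bar>b x\<bar>"
        by (simp add: abs_mult[symmetric] algebra_simps)
      also have "\<dots> \<le> \<epsilon> * B" using e[OF True] B[OF True] by (intro mult_mono) auto
      finally show ?thesis using True by simp
    qed simp
  qed
  also have "\<dots> = \<epsilon> * B * (2*L)" using L int_ind_const[of "-L" L "\<epsilon> * B"] by simp
  finally show ?thesis .
qed

lemma GI_unif:
  fixes b G g :: "real \<Rightarrow> real"
  assumes b: "continuous_on UNIV b" and G: "continuous_on UNIV G"
    and g: "continuous_on {-L..L} g" and L: "0 < L" and e: "0 < e"
  obtains \<delta> where "\<delta> > 0" "\<And>h. continuous_on {-L..L} h \<Longrightarrow> (\<forall>x\<in>{-L..L}. \<bar>h x - g x\<bar> < \<delta>) \<Longrightarrow>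
      \<bar>GI b G L h - GI b G L g\<bar> < e"
proof -
  have "compact (g ` {-L..L})" by (rule compact_continuous_image[OF g]) simp
  hence "bounded (g ` {-L..L})" by (rule compact_imp_bounded)
  then obtain R where R: "R > 0" "\<forall>y\<in>g ` {-L..L}. norm y \<le> R" by (auto simp: bounded_pos)
  obtain Bb where Bb: "Bb > 0" "\<And>x. x \<in> {-L..L} \<Longrightarrow> \<bar>b x\<bar> \<le> Bb" using cont_bound[OF b] by blast
  have "uniformly_continuous_on {-R-1..R+1} G"
    by (rule compact_uniformly_continuous) (use G in \<open>auto intro: continuous_on_subset\<close>)
  moreover define \<epsilon> where "\<epsilon> = e / (2 * (Bb * (2*L)))"
  have \<epsilon>: "0 < \<epsilon>" using e Bb L by (simp add: \<epsilon>_def)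
  ultimately obtain d where d: "d > 0" "\<forall>x\<in>{-R-1..R+1}. \<forall>x'\<in>{-R-1..R+1}. dist x' x < d \<longrightarrow> dist (G x') (G x) < \<epsilon>"
    unfolding uniformly_continuous_on_def by metis
  show ?thesis
  proof (rule that[of "min d 1"])
    show "0 < min d 1" using d by simp
    fix h assume h: "continuous_on {-L..L} h" and cl: "\<forall>x\<in>{-L..L}. \<bar>h x - g x\<bar> < min d 1"
    have "\<bar>GI b G L h - GI b G L g\<bar> \<le> \<epsilon> * Bb * (2*L)"
    proof (rule GI_close[OF b G h g L Bb(2)])
      fix x assume x: "x \<in> {-L..L}"
      have gx: "\<bar>g x\<bar> \<le> R" using R x by auto
      have hx: "\<bar>h x - g x\<bar> < min d 1" using cl x by auto
      have m1: "g x \<in> {-R-1..R+1}" using gx by auto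
      have m2: "h x \<in> {-R-1..R+1}" using gx hx by auto
      have "dist (h x) (g x) < d" using hx by (simp add: dist_real_def)
      hence "dist (G (h x)) (G (g x)) < \<epsilon>"
        using d(2) m1 m2 by blast
      thus "\<bar>G (h x) - G (g x)\<bar> \<le> \<epsilon>" by (simp add: dist_real_def)
    qed auto
    also have "\<epsilon> * Bb * (2*L) = e/2" using Bb L by (simp add: \<epsilon>_def field_simps)
    finally show "\<bar>GI b G L h - GI b G L g\<bar> < e" using e by simp
  qed
qed

lemma AI_tendsto:
  fixes a v :: "real \<Rightarrow> real" and F :: "nat \<Rightarrow> real \<Rightarrow> real"
  assumes a: "continuous_on UNIV a"
    and Fm: "\<And>k. F k \<in> borel_measurable lborel" and Fs: "\<And>k. integrable lborel (\<lambda>x. (F k x)\<^sup>2)"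
    and Fz: "\<And>k x. x \<notin> {c..d} \<Longrightarrow> F k x = 0"
    and vm: "v \<in> borel_measurable lborel" and vs: "integrable lborel (\<lambda>x. (v x)\<^sup>2)"
    and vz: "\<And>x. x \<notin> {c..d} \<Longrightarrow> v x = 0"
    and D: "(\<lambda>k. LINT x|lborel. (F k x - v x)\<^sup>2) \<longlonglongrightarrow> 0"
  shows "(\<lambda>k. LINT x|lborel. a x * (F k x)\<^sup>2) \<longlonglongrightarrow> (LINT x|lborel. a x * (v x)\<^sup>2)"
proof -
  obtain B where B: "B > 0" "\<And>x. x \<in> {c..d} \<Longrightarrow> \<bar>a x\<bar> \<le> B" using cont_bound[OF a] by blast
  define Dk where "Dk k = (LINT x|lborel. (F k x - v x)\<^sup>2)" for k
  define Kv where "Kv = (LINT x|lborel. (v x)\<^sup>2)"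
  have dm: "(\<lambda>x. F k x - v x) \<in> borel_measurable lborel" for k using Fm vm by measurable
  have ds: "integrable lborel (\<lambda>x. (F k x - v x)\<^sup>2)" for k by (rule sq_diff_int[OF Fm vm Fs vs])
  have i1: "integrable lborel (\<lambda>x. a x * (F k x - v x)\<^sup>2)" for k
    by (rule coef_int[OF a dm ds, of c d]) (simp add: Fz vz)
  have pi: "integrable lborel (\<lambda>x. v x * (F k x - v x))" for k by (rule prod_int[OF vm dm vs ds])
  have i2: "integrable lborel (\<lambda>x. a x * (v x * (F k x - v x)))" for k
    by (rule coef_int1[OF a pi, of c d]) (simp add: vz)
  have i3: "integrable lborel (\<lambda>x. a x * (v x)\<^sup>2)" by (rule coef_int[OF a vm vs, of c d]) (simp add: vz)
  have iF: "integrable lborel (\<lambda>x. a x * (F k x)\<^sup>2)" for k by (rule coef_int[OF a Fm Fs, of c d]) (simp add: Fz)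
  have bnd: "\<bar>(LINT x|lborel. a x * (F k x)\<^sup>2) - (LINT x|lborel. a x * (v x)\<^sup>2)\<bar> \<le> B * Dk k + 2 * B * (sqrt Kv * sqrt (Dk k))" for k
  proof -
    have "(LINT x|lborel. a x * (F k x)\<^sup>2) - (LINT x|lborel. a x * (v x)\<^sup>2) = (LINT x|lborel. a x * (F k x)\<^sup>2 - a x * (v x)\<^sup>2)"
      by (rule Bochner_Integration.integral_diff[OF iF i3, symmetric])
    also have "\<dots> = (LINT x|lborel. a x * (F k x - v x)\<^sup>2 + 2 * (a x * (v x * (F k x - v x))))"
      by (rule Bochner_Integration.integral_cong[OF refl]) (simp add: power2_eq_square algebra_simps)
    also have "\<dots> = (LINT x|lborel. a x * (F k x - v x)\<^sup>2) + 2 * (LINT x|lborel. a x * (v x * (F k x - v x)))"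
      using i1 i2 by (subst Bochner_Integration.integral_add) (auto intro: integral_mult_right_zero)
    finally have eq: "(LINT x|lborel. a x * (F k x)\<^sup>2) - (LINT x|lborel. a x * (v x)\<^sup>2) =
        (LINT x|lborel. a x * (F k x - v x)\<^sup>2) + 2 * (LINT x|lborel. a x * (v x * (F k x - v x)))" .
    have b1: "\<bar>LINT x|lborel. a x * (F k x - v x)\<^sup>2\<bar> \<le> B * Dk k"
    proof -
      have "\<bar>LINT x|lborel. a x * (F k x - v x)\<^sup>2\<bar> \<le> (LINT x|lborel. \<bar>a x * (F k x - v x)\<^sup>2\<bar>)"
        by (rule integral_abs_bound)
      also have "\<dots> \<le> (LINT x|lborel. B * (F k x - v x)\<^sup>2)"
      proof (rule integral_mono)
        show "integrable lborel (\<lambda>x. \<bar>a x * (F k x - v x)\<^sup>2\<bar>)" using i1 by auto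
        show "integrable lborel (\<lambda>x. B * (F k x - v x)\<^sup>2)" using ds by auto
        fix x show "\<bar>a x * (F k x - v x)\<^sup>2\<bar> \<le> B * (F k x - v x)\<^sup>2"
        proof (cases "x \<in> {c..d}")
          case True thus ?thesis using B(2)[OF True] by (simp add: abs_mult mult_right_mono)
        qed (simp add: Fz vz)
      qed
      also have "\<dots> = B * Dk k" unfolding Dk_def by (rule integral_mult_right_zero)
      finally show ?thesis .
    qed
    have b2: "\<bar>LINT x|lborel. a x * (v x * (F k x - v x))\<bar> \<le> B * (sqrt Kv * sqrt (Dk k))"
    proof -
      have "\<bar>LINT x|lborel. a x * (v x * (F k x - v x))\<bar> \<le> (LINT x|lborel. \<bar>a x * (v x * (F k x - v x))\<bar>)"
        by (rule integral_abs_bound)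
      also have "\<dots> \<le> (LINT x|lborel. B * \<bar>v x * (F k x - v x)\<bar>)"
      proof (rule integral_mono)
        show "integrable lborel (\<lambda>x. \<bar>a x * (v x * (F k x - v x))\<bar>)" using i2 by auto
        show "integrable lborel (\<lambda>x. B * \<bar>v x * (F k x - v x)\<bar>)" using pi by auto
        fix x show "\<bar>a x * (v x * (F k x - v x))\<bar> \<le> B * \<bar>v x * (F k x - v x)\<bar>"
        proof (cases "x \<in> {c..d}")
          case True thus ?thesis using B(2)[OF True] by (simp add: abs_mult mult_right_mono)
        qed (simp add: Fz vz)
      qed
      also have "\<dots> = B * (LINT x|lborel. \<bar>v x * (F k x - v x)\<bar>)" by (rule integral_mult_right_zero)
      also have "\<dots> \<le> B * (sqrt Kv * sqrt (Dk k))"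
        unfolding Kv_def Dk_def using B by (intro mult_left_mono CS_int[OF vm dm vs ds]) auto
      finally show ?thesis .
    qed
    show ?thesis unfolding eq using b1 b2 by (simp add: abs_triangle_ineq order_trans[OF abs_triangle_ineq])
  qed
  have "(\<lambda>k. B * Dk k + 2 * B * (sqrt Kv * sqrt (Dk k))) \<longlonglongrightarrow> B * 0 + 2 * B * (sqrt Kv * sqrt 0)"
    using D unfolding Dk_def[symmetric] by (intro tendsto_intros)
  hence z: "(\<lambda>k. B * Dk k + 2 * B * (sqrt Kv * sqrt (Dk k))) \<longlonglongrightarrow> 0" by simp
  have "(\<lambda>k. (LINT x|lborel. a x * (F k x)\<^sup>2) - (LINT x|lborel. a x * (v x)\<^sup>2)) \<longlonglongrightarrow> 0"
    by (rule Lim_null_comparison[OF _ z]) (use bnd in simp)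
  thus ?thesis by (simp add: LIM_zero_cancel)
qed

lemma L1_tendsto:
  fixes v :: "real \<Rightarrow> real" and F :: "nat \<Rightarrow> real \<Rightarrow> real"
  assumes Fm: "\<And>k. F k \<in> borel_measurable lborel" and Fs: "\<And>k. integrable lborel (\<lambda>x. (F k x)\<^sup>2)"
    and Fz: "\<And>k x. x \<notin> {c..d} \<Longrightarrow> F k x = 0"
    and vm: "v \<in> borel_measurable lborel" and vs: "integrable lborel (\<lambda>x. (v x)\<^sup>2)"
    and vz: "\<And>x. x \<notin> {c..d} \<Longrightarrow> v x = 0"
    and D: "(\<lambda>k. LINT x|lborel. (F k x - v x)\<^sup>2) \<longlonglongrightarrow> 0"
    and A: "A \<in> sets borel"
  shows "(\<lambda>k. LINT x|lborel. indicator A x * F k x) \<longlonglongrightarrow> (LINT x|lborel. indicator A x * v x)"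
proof -
  define Dk where "Dk k = (LINT x|lborel. (F k x - v x)\<^sup>2)" for k
  have dm: "(\<lambda>x. F k x - v x) \<in> borel_measurable lborel" for k using Fm vm by measurable
  have ds: "integrable lborel (\<lambda>x. (F k x - v x)\<^sup>2)" for k by (rule sq_diff_int[OF Fm vm Fs vs])
  have Fi: "integrable lborel (F k)" for k by (rule sq_int_imp_int[OF Fm Fs Fz])
  have vi: "integrable lborel v" by (rule sq_int_imp_int[OF vm vs vz])
  have im: "(indicator {c..d} :: real \<Rightarrow> real) \<in> borel_measurable lborel" by simp
  have isq: "integrable lborel (\<lambda>x. (indicator {c..d} x :: real)\<^sup>2)"
  proof -
    have "(\<lambda>x. (indicator {c..d} x :: real)\<^sup>2) = (\<lambda>x. indicator {c..d} x * 1)" by (auto simp: fun_eq_iff indicator_def)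
    thus ?thesis using ind_const_int[of c d 1] by simp
  qed
  have bnd: "\<bar>(LINT x|lborel. indicator A x * F k x) - (LINT x|lborel. indicator A x * v x)\<bar> \<le>
     sqrt (LINT x|lborel. (indicator {c..d} x :: real)\<^sup>2) * sqrt (Dk k)" for k
  proof -
    have A': "A \<in> sets lborel" using A by simp
    have iA1: "integrable lborel (\<lambda>x. indicator A x * F k x)" using integrable_mult_indicator[OF A' Fi[of k]] by simp
    have iA2: "integrable lborel (\<lambda>x. indicator A x * v x)" using integrable_mult_indicator[OF A' vi] by simp
    have "(LINT x|lborel. indicator A x * F k x) - (LINT x|lborel. indicator A x * v x) = (LINT x|lborel. indicator A x * F k x - indicator A x * v x)"
      by (rule Bochner_Integration.integral_diff[OF iA1 iA2, symmetric])
    hence "\<bar>(LINT x|lborel. indicator A x * F k x) - (LINT x|lborel. indicator A x * v x)\<bar> \<le> (LINT x|lborel. \<bar>indicator A x * F k x - indicator A x * v x\<bar>)"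
      by (simp only: integral_abs_bound)
    also have "\<dots> \<le> (LINT x|lborel. \<bar>indicator {c..d} x * (F k x - v x)\<bar>)"
    proof (rule integral_mono)
      show "integrable lborel (\<lambda>x. \<bar>indicator A x * F k x - indicator A x * v x\<bar>)" using iA1 iA2 by auto
      show "integrable lborel (\<lambda>x. \<bar>indicator {c..d} x * (F k x - v x)\<bar>)"
        using prod_int[OF im dm isq ds] by auto
      fix x show "\<bar>indicator A x * F k x - indicator A x * v x\<bar> \<le> \<bar>indicator {c..d} x * (F k x - v x)\<bar>"
        using Fz[of x k] vz[of x] by (cases "x \<in> A"; cases "x \<in> {c..d}") auto
    qed
    also have "\<dots> \<le> sqrt (LINT x|lborel. (indicator {c..d} x :: real)\<^sup>2) * sqrt (Dk k)"
      unfolding Dk_def by (rule CS_int[OF im dm isq ds])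
    finally show ?thesis .
  qed
  have "(\<lambda>k. sqrt (LINT x|lborel. (indicator {c..d} x :: real)\<^sup>2) * sqrt (Dk k)) \<longlonglongrightarrow> sqrt (LINT x|lborel. (indicator {c..d} x :: real)\<^sup>2) * sqrt 0"
    using D unfolding Dk_def[symmetric] by (intro tendsto_intros)
  hence z: "(\<lambda>k. sqrt (LINT x|lborel. (indicator {c..d} x :: real)\<^sup>2) * sqrt (Dk k)) \<longlonglongrightarrow> 0" by simp
  have "(\<lambda>k. (LINT x|lborel. indicator A x * F k x) - (LINT x|lborel. indicator A x * v x)) \<longlonglongrightarrow> 0"
    by (rule Lim_null_comparison[OF _ z]) (use bnd in simp)
  thus ?thesis by (simp add: LIM_zero_cancel)
qed



lemma AI_lower:
  fixes a V :: "real \<Rightarrow> real"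
  assumes a: "continuous_on UNIV a" and amin: "\<And>x. x \<in> {c..d} \<Longrightarrow> amin \<le> a x"
    and m: "V \<in> borel_measurable lborel" and i: "integrable lborel (\<lambda>x. (V x)\<^sup>2)"
    and z: "\<And>x. x \<notin> {c..d} \<Longrightarrow> V x = 0"
  shows "amin * (LINT x|lborel. (V x)\<^sup>2) \<le> (LINT x|lborel. a x * (V x)\<^sup>2)"
proof -
  have "amin * (LINT x|lborel. (V x)\<^sup>2) = (LINT x|lborel. amin * (V x)\<^sup>2)" by (rule integral_mult_right_zero[symmetric])
  also have "\<dots> \<le> (LINT x|lborel. a x * (V x)\<^sup>2)"
  proof (rule integral_mono)
    show "integrable lborel (\<lambda>x. amin * (V x)\<^sup>2)" using i by simp
    show "integrable lborel (\<lambda>x. a x * (V x)\<^sup>2)" by (rule coef_int[OF a m i z])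
    fix x show "amin * (V x)\<^sup>2 \<le> a x * (V x)\<^sup>2"
    proof (cases "x \<in> {c..d}")
      case True thus ?thesis using amin[OF True] by (simp add: mult_right_mono)
    qed (simp add: z)
  qed
  finally show ?thesis .
qed

lemma AI_const:
  fixes a :: "real \<Rightarrow> real"
  shows "AI a L (\<lambda>x. 0 + c) = c\<^sup>2 * AI a L (\<lambda>x. 1)"
  unfolding AI_def
proof -
  have "(LINT x|lborel. a x * (indicator {-L..L} x * (0 + c))\<^sup>2) = (LINT x|lborel. c\<^sup>2 * (a x * (indicator {-L..L} x * 1)\<^sup>2))"
    by (rule Bochner_Integration.integral_cong[OF refl]) (simp add: power2_eq_square algebra_simps)
  also have "\<dots> = c\<^sup>2 * (LINT x|lborel. a x * (indicator {-L..L} x * 1)\<^sup>2)" by (rule integral_mult_right_zero)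
  finally show "(LINT x|lborel. a x * (indicator {-L..L} x * (0 + c))\<^sup>2) = c\<^sup>2 * (LINT x|lborel. a x * (indicator {-L..L} x * 1)\<^sup>2)" .
qed

lemma AI_shift:
  fixes a w v :: "real \<Rightarrow> real"
  assumes a: "continuous_on UNIV a" and w: "is_wderiv L w v"
  shows "AI a L (\<lambda>x. v x + d) = AI a L v + 2 * d * (LINT x|lborel. a x * (indicator {-L..L} x * v x)) + d\<^sup>2 * AI a L (\<lambda>x. 1)"
proof -
  let ?I = "indicator {-L..L} :: real \<Rightarrow> real"
  have i1: "integrable lborel (\<lambda>x. a x * (?I x * v x)\<^sup>2)" by (rule wd_A_int[OF a w])
  have i2: "integrable lborel (\<lambda>x. a x * (?I x * v x))"
    by (rule coef_int1[OF a wd_int[OF w], of "-L" L]) simp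
  have i3: "integrable lborel (\<lambda>x. a x * (?I x * 1)\<^sup>2)" by (rule AI_one_int[OF a])
  have "AI a L (\<lambda>x. v x + d) = (LINT x|lborel. (a x * (?I x * v x)\<^sup>2 + 2 * d * (a x * (?I x * v x))) + d\<^sup>2 * (a x * (?I x * 1)\<^sup>2))"
    unfolding AI_def
    by (rule Bochner_Integration.integral_cong[OF refl]) (simp add: indicator_def power2_eq_square algebra_simps)
  also have "\<dots> = (LINT x|lborel. a x * (?I x * v x)\<^sup>2 + 2 * d * (a x * (?I x * v x))) + (LINT x|lborel. d\<^sup>2 * (a x * (?I x * 1)\<^sup>2))"
    by (rule Bochner_Integration.integral_add) (use i1 i2 i3 in auto)
  also have "(LINT x|lborel. a x * (?I x * v x)\<^sup>2 + 2 * d * (a x * (?I x * v x))) = AI a L v + (LINT x|lborel. 2 * d * (a x * (?I x * v x)))"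
    unfolding AI_def by (rule Bochner_Integration.integral_add) (use i1 i2 in auto)
  also have "(LINT x|lborel. 2 * d * (a x * (?I x * v x))) = 2 * d * (LINT x|lborel. a x * (?I x * v x))"
    by (rule integral_mult_right_zero)
  also have "(LINT x|lborel. d\<^sup>2 * (a x * (?I x * 1)\<^sup>2)) = d\<^sup>2 * AI a L (\<lambda>x. 1)"
    unfolding AI_def by (rule integral_mult_right_zero)
  finally show ?thesis .
qed

lemma GI_nonneg:
  fixes b G h :: "real \<Rightarrow> real"
  assumes "\<And>s. 0 \<le> G s" "\<And>x. 0 < b x"
  shows "0 \<le> GI b G L h"
  unfolding GI_def using assms by (intro Bochner_Integration.integral_nonneg) (simp add: less_imp_le)



theorem proposition5p3:
  fixes a b G :: "real \<Rightarrow> real" and M L m :: real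
    and ms :: "nat \<Rightarrow> real" and us :: "nat \<Rightarrow> real \<Rightarrow> real"
  assumes a_cont: "continuous_on UNIV a" and a_even: "\<forall>x. a (-x) = a x" and a_pos: "\<forall>x. a x > 0"
    and b_cont: "continuous_on UNIV b" and b_even: "\<forall>x. b (-x) = b x" and b_pos: "\<forall>x. b x > 0"
    and G_cont: "continuous_on UNIV G" and G_even: "\<forall>s. G (-s) = G s"
    and M_pos: "M > 0" and G_min: "\<forall>s. G s \<ge> G M" and G_M: "G M = 0"
    and G_pos: "\<forall>s\<in>{0..<M}. G s > 0"
    and L_pos: "L > 0"
    and ms_nonneg: "\<forall>k. ms k \<ge> 0" and ms_lim: "ms \<longlonglongrightarrow> m"
    and us_min: "\<forall>k. minimizer a b G L (ms k) (us k)"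
  shows "\<exists>r um. strict_mono r \<and> minimizer a b G L m um \<and>
           H1_converges L (\<lambda>k. us (r k)) um \<and>
           uniform_limit {-L..L} (\<lambda>k. us (r k)) um sequentially"
proof -
  have Lp: "0 < L" by (rule L_pos)
  have mn: "minimizer a b G L (ms k) (us k)" for k using us_min by blast
  have h1m: "H1m L (ms k) (us k)" for k using mn[of k] unfolding minimizer_def by blast
  have "\<forall>k. \<exists>v. is_wderiv L (us k) v" using h1m unfolding H1m_def H1_def by blast
  then obtain vs where vs: "\<And>k. is_wderiv L (us k) (vs k)" by metis
  define V where "V k x = indicator {-L..L} x * vs k x" for k x
  have Vm: "V k \<in> borel_measurable lborel" for k unfolding V_def by (rule wd_meas[OF vs])
  have Vs: "integrable lborel (\<lambda>x. (V k x)\<^sup>2)" for k unfolding V_def by (rule wd_sq_int[OF vs])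
  have Vz: "V k x = 0" if "x \<notin> {-L..L}" for k x unfolding V_def using that by simp
  have Gnn: "0 \<le> G s" for s using G_min G_M by metis
  have bpos: "0 < b x" for x using b_pos by blast
  have apos: "0 < a x" for x using a_pos by blast
  have "\<exists>x\<in>{-L..L}. \<forall>y\<in>{-L..L}. a x \<le> a y"
  proof (rule continuous_attains_inf)
    show "compact {-L..L::real}" by simp
    show "{-L..L} \<noteq> {}" using Lp by simp
    show "continuous_on {-L..L} a" using a_cont by (rule continuous_on_subset) simp
  qed
  then obtain x0 where x0: "x0 \<in> {-L..L}" "\<And>y. y \<in> {-L..L} \<Longrightarrow> a x0 \<le> a y" by blast
  define amin where "amin = a x0"
  have amin: "0 < amin" "\<And>y. y \<in> {-L..L} \<Longrightarrow> amin \<le> a y" using x0 apos unfolding amin_def by auto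
  obtain Bb where Bb: "Bb > 0" "\<And>x. x \<in> {-L..L} \<Longrightarrow> \<bar>b x\<bar> \<le> Bb" using cont_bound[OF b_cont] by blast
  have "Bseq ms" using ms_lim by (intro convergent_imp_Bseq) (auto simp: convergent_def)
  then obtain Bm where Bm: "Bm > 0" "\<And>k. \<bar>ms k\<bar> \<le> Bm" unfolding Bseq_def by auto
  obtain Gm where Gm: "Gm > 0" "\<And>s. s \<in> {-Bm..Bm} \<Longrightarrow> \<bar>G s\<bar> \<le> Gm" using cont_bound[OF G_cont] by blast
  define A1 where "A1 = AI a L (\<lambda>x. 1)"
  have A1: "0 \<le> A1" unfolding A1_def AI_def
    by (intro Bochner_Integration.integral_nonneg) (simp add: apos less_imp_le)
  define C0 where "C0 = (Bm/L)\<^sup>2 * A1 / 2 + Gm * Bb * (2*L)"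
  have Ebound: "AI a L (vs k) / 2 + GI b G L (us k) \<le> C0" for k
  proof -
    have wd0: "is_wderiv L (\<lambda>x. 0) (\<lambda>x. 0)" by (rule wd_zero[OF Lp])
    have h0: "H1m L 0 (\<lambda>x. 0)" using wd0 unfolding H1m_def H1_def by auto
    have wdl: "is_wderiv L (\<lambda>x. 0 + ms k * x / L) (\<lambda>x. 0 + ms k / L)" by (rule wd_shift[OF wd0 Lp])
    have hl: "H1m L (ms k) (\<lambda>x. 0 + ms k * x / L)" using H1m_shift[OF h0 wd0 Lp, of "ms k"] by simp
    have "energy a b G L (us k) (vs k) \<le> energy a b G L (\<lambda>x. 0 + ms k * x / L) (\<lambda>x. 0 + ms k / L)"
      using mn[of k] hl vs[of k] wdl unfolding minimizer_def by blast
    hence le: "AI a L (vs k) / 2 + GI b G L (us k) \<le> AI a L (\<lambda>x. 0 + ms k / L) / 2 + GI b G L (\<lambda>x. 0 + ms k * x / L)"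
      using energy_split[OF a_cont b_cont G_cont vs[of k]] energy_split[OF a_cont b_cont G_cont wdl] by simp
    have e1: "AI a L (\<lambda>x. 0 + ms k / L) = (ms k / L)\<^sup>2 * A1" unfolding A1_def by (rule AI_const)
    have "(ms k / L)\<^sup>2 \<le> (Bm / L)\<^sup>2"
    proof -
      have "\<bar>ms k / L\<bar> \<le> Bm / L" using Bm(2)[of k] Lp by (simp add: divide_right_mono)
      hence "\<bar>ms k / L\<bar>\<^sup>2 \<le> (Bm / L)\<^sup>2" by (rule power_mono) simp
      thus ?thesis by (simp only: power2_abs)
    qed
    hence e1': "AI a L (\<lambda>x. 0 + ms k / L) \<le> (Bm / L)\<^sup>2 * A1" unfolding e1 using A1 by (rule mult_right_mono)
    have e2: "GI b G L (\<lambda>x. 0 + ms k * x / L) \<le> Gm * Bb * (2*L)"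
    proof -
      have "GI b G L (\<lambda>x. 0 + ms k * x / L) \<le> (LINT x|lborel. indicator {-L..L} x * (Gm * Bb))"
        unfolding GI_def
      proof (rule integral_mono)
        have "continuous_on {-L..L} (\<lambda>x. 0 + ms k * x / L)" by (intro continuous_intros) (use Lp in simp)
        thus "integrable lborel (\<lambda>x. indicator {-L..L} x * (G (0 + ms k * x / L) * b x))"
          by (rule G_int[OF b_cont G_cont])
        show "integrable lborel (\<lambda>x. indicator {-L..L} x * (Gm * Bb))" by (rule ind_const_int)
        fix x show "indicator {-L..L} x * (G (0 + ms k * x / L) * b x) \<le> indicator {-L..L} x * (Gm * Bb)"
        proof (cases "x \<in> {-L..L}")
          case True
          have "\<bar>ms k * x / L\<bar> \<le> Bm"
          proof -
            have "\<bar>x / L\<bar> \<le> 1" using True Lp by (auto simp: abs_le_iff field_simps)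
            hence "\<bar>ms k\<bar> * \<bar>x / L\<bar> \<le> Bm * 1" using Bm by (intro mult_mono) auto
            thus ?thesis by (simp add: abs_mult)
          qed
          hence "0 + ms k * x / L \<in> {-Bm..Bm}" unfolding atLeastAtMost_iff add_0_left by (metis abs_le_iff minus_le_iff)
          hence "G (0 + ms k * x / L) \<le> Gm" using Gm(2)[of "0 + ms k * x / L"] by (simp add: abs_le_iff)
          moreover have "b x \<le> Bb" using Bb(2)[OF True] by simp
          ultimately have "G (0 + ms k * x / L) * b x \<le> Gm * Bb"
            using Gnn bpos Gm by (intro mult_mono) (auto simp: less_imp_le)
          thus ?thesis using True by simp
        qed simp
      qed
      also have "\<dots> = Gm * Bb * (2*L)" using int_ind_const[of "-L" L "Gm * Bb"] Lp by simp
      finally show ?thesis .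
    qed
    show ?thesis using le e1' e2 unfolding C0_def by simp
  qed
  define K where "K = 2 * C0 / amin"
  have Kb: "(LINT x|lborel. (indicator {-L..L} x * vs k x)\<^sup>2) \<le> K" for k
  proof -
    have "amin * (LINT x|lborel. (V k x)\<^sup>2) \<le> (LINT x|lborel. a x * (V k x)\<^sup>2)"
      by (rule AI_lower[OF a_cont amin(2) Vm Vs Vz])
    also have "\<dots> = AI a L (vs k)" unfolding AI_def V_def ..
    also have "\<dots> \<le> 2 * C0"
    proof -
      have "0 \<le> GI b G L (us k)" by (rule GI_nonneg) (auto simp: Gnn bpos)
      thus ?thesis using Ebound[of k] by simp
    qed
    finally have "amin * (LINT x|lborel. (V k x)\<^sup>2) \<le> 2 * C0" .
    hence "(LINT x|lborel. (V k x)\<^sup>2) \<le> K" unfolding K_def using amin(1) by (simp add: field_simps)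
    thus ?thesis unfolding V_def .
  qed
  have K0: "0 \<le> K"
  proof -
    have "0 \<le> (LINT x|lborel. (indicator {-L..L} x * vs 0 x)\<^sup>2)" by (rule Bochner_Integration.integral_nonneg) simp
    thus ?thesis using Kb[of 0] by linarith
  qed
  define R0 where "R0 = Bm + K/2 + L"
  have usb: "\<bar>us k x\<bar> \<le> R0" if x: "x \<in> {-L..L}" for k x
  proof -
    have "\<bar>us k x - us k (-L)\<bar> \<le> K/(2*1) + 1*(x - (-L))/2"
      using x by (intro wd_bound[OF vs _ _ _ _ Kb]) auto
    moreover have "us k (-L) = - ms k" using h1m[of k] unfolding H1m_def by simp
    ultimately have c: "\<bar>us k x + ms k\<bar> \<le> K/2 + (x+L)/2" by simp
    have c1: "us k x + ms k \<le> K/2 + (x+L)/2" "-(us k x + ms k) \<le> K/2 + (x+L)/2" using c by linarith+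
    have c2: "ms k \<le> Bm" "- ms k \<le> Bm" using Bm(2)[of k] by linarith+
    have c3: "x \<le> L" using x by simp
    show ?thesis unfolding R0_def abs_le_iff using c1 c2 c3 by argo
  qed
  have equi: "\<exists>d>0. \<forall>n y. y \<in> {-L..L} \<and> norm (x - y) < d \<longrightarrow> norm (us n x - us n y) < e"
    if x: "x \<in> {-L..L}" and e: "0 < e" for x e :: real
  proof (intro exI conjI allI impI)
    have "0 \<le> K/e" using K0 e by simp
    thus "0 < e/(K/e+1)" using e by simp
    fix n y assume "y \<in> {-L..L} \<and> norm (x - y) < e/(K/e+1)"
    thus "norm (us n x - us n y) < e" using wd_equi[OF vs Kb x _ e] by simp
  qed
  have usb': "\<And>n x. x \<in> {-L..L} \<Longrightarrow> norm (us n x) \<le> R0" using usb by simp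
  obtain g :: "real \<Rightarrow> real" and r1 :: "nat \<Rightarrow> nat" where g: "continuous_on {-L..L} g" and r1: "strict_mono r1"
    and gconv: "\<And>e. 0 < e \<Longrightarrow> \<exists>N. \<forall>n x. n \<ge> N \<and> x \<in> {-L..L} \<longrightarrow> norm (us (r1 n) x - g x) < e"
  proof -
    show thesis
    proof (rule Arzela_Ascoli[of "{-L..L}" us R0, OF _ usb' equi])
      fix gg :: "real \<Rightarrow> real" and k :: "nat \<Rightarrow> nat"
      assume a1: "continuous_on {-L..L} gg" and a2: "strict_mono k"
        and a3: "\<And>e. 0 < e \<Longrightarrow> \<exists>N. \<forall>n x. n \<ge> N \<and> x \<in> {-L..L} \<longrightarrow> norm (us (k n) x - gg x) < e"
      show thesis using a1 a2 a3 by (rule that)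
    qed simp
  qed
  have Cms: "Cauchy (\<lambda>n. ms (r1 n))"
  proof -
    have "(\<lambda>n. ms (r1 n)) \<longlonglongrightarrow> m" using LIMSEQ_subseq_LIMSEQ[OF ms_lim r1] by (simp add: o_def)
    thus ?thesis by (rule LIMSEQ_imp_Cauchy)
  qed
  have cauchyV: "\<exists>N. \<forall>i\<ge>N. \<forall>j\<ge>N. (LINT x|lborel. (V (r1 i) x - V (r1 j) x)\<^sup>2) < e" if e: "0 < e" for e
  proof -
    define \<eta> where "\<eta> = amin * e / 4"
    have \<eta>: "0 < \<eta>" using amin(1) e by (simp add: \<eta>_def)
    obtain \<delta> where \<delta>: "\<delta> > 0" and \<delta>h: "\<And>h. continuous_on {-L..L} h \<Longrightarrow> (\<forall>x\<in>{-L..L}. \<bar>h x - g x\<bar> < \<delta>) \<Longrightarrow> \<bar>GI b G L h - GI b G L g\<bar> < \<eta>/8"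
      using GI_unif[OF b_cont G_cont g Lp, of "\<eta>/8"] \<eta> by auto
    obtain N1 where N1: "\<forall>n x. n \<ge> N1 \<and> x \<in> {-L..L} \<longrightarrow> norm (us (r1 n) x - g x) < \<delta>/2"
      using gconv[of "\<delta>/2"] \<delta> by auto
    define s0 where "s0 = min \<delta> (min 1 (\<eta> * L\<^sup>2 / (A1 + 1)))"
    have s0: "0 < s0" using \<delta> \<eta> Lp A1 by (simp add: s0_def)
    obtain N2 where N2: "\<forall>i\<ge>N2. \<forall>j\<ge>N2. dist (ms (r1 i)) (ms (r1 j)) < s0"
      using Cms s0 unfolding Cauchy_def by blast
    show ?thesis
    proof (intro exI allI impI)
      fix i j assume i: "max N1 N2 \<le> i" and j: "max N1 N2 \<le> j"
      define m1 where "m1 = ms (r1 i)"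
      define m2 where "m2 = ms (r1 j)"
      have \<Delta>: "\<bar>m1 - m2\<bar> < s0" using N2 i j unfolding m1_def m2_def dist_real_def by auto
      have cl1: "\<bar>us (r1 i) x - g x\<bar> < \<delta>/2" if "x \<in> {-L..L}" for x using N1 i that by auto
      have cl2: "\<bar>us (r1 j) x - g x\<bar> < \<delta>/2" if "x \<in> {-L..L}" for x using N1 j that by auto
      have mi: "AI a L (\<lambda>x. vs (r1 i) x - vs (r1 j) x) / 4 \<le> ((m1-m2)/(2*L))\<^sup>2 * AI a L (\<lambda>x. 1)
         + GI b G L (\<lambda>x. 1/2 * us (r1 i) x + 1/2 * us (r1 j) x + ((m1-m2)/2) * x / L)
         + GI b G L (\<lambda>x. 1/2 * us (r1 i) x + 1/2 * us (r1 j) x + (-((m1-m2)/2)) * x / L)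
         - GI b G L (us (r1 i)) - GI b G L (us (r1 j))"
        unfolding m1_def m2_def by (rule mid_ineq[OF a_cont b_cont G_cont Lp mn mn vs vs])
      have wl: "is_wderiv L (\<lambda>x. 1/2 * us (r1 i) x + 1/2 * us (r1 j) x) (\<lambda>x. 1/2 * vs (r1 i) x + 1/2 * vs (r1 j) x)"
        by (rule wd_lin[OF vs vs])
      have wc: "continuous_on {-L..L} (\<lambda>x. 1/2 * us (r1 i) x + 1/2 * us (r1 j) x + d * x / L)" for d
        by (rule wd_cont[OF wd_shift[OF wl Lp]])
      have wclose: "\<bar>GI b G L (\<lambda>x. 1/2 * us (r1 i) x + 1/2 * us (r1 j) x + d * x / L) - GI b G L g\<bar> < \<eta>/8"
        if d: "\<bar>d\<bar> = \<bar>m1 - m2\<bar>/2" for d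
      proof (rule \<delta>h[OF wc], intro ballI)
        fix x assume x: "x \<in> {-L..L}"
        have "\<bar>x / L\<bar> \<le> 1" using x Lp by (auto simp: abs_le_iff field_simps)
        hence "\<bar>d\<bar> * \<bar>x / L\<bar> \<le> \<bar>d\<bar> * 1" by (intro mult_left_mono) auto
        moreover have "\<bar>d * x / L\<bar> = \<bar>d\<bar> * \<bar>x / L\<bar>" by (simp only: times_divide_eq_right[symmetric] abs_mult)
        ultimately have dx: "\<bar>d * x / L\<bar> \<le> \<bar>m1 - m2\<bar>/2" using d by simp
        have "\<bar>m1 - m2\<bar> < \<delta>" using \<Delta> unfolding s0_def by simp
        moreover have "1/2 * us (r1 i) x + 1/2 * us (r1 j) x + d * x / L - g x = 1/2 * (us (r1 i) x - g x) + 1/2 * (us (r1 j) x - g x) + d * x / L"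
          by (simp add: algebra_simps)
        ultimately show "\<bar>1/2 * us (r1 i) x + 1/2 * us (r1 j) x + d * x / L - g x\<bar> < \<delta>"
          using cl1[OF x] cl2[OF x] dx by (simp add: abs_le_iff abs_less_iff; argo)
      qed
      have g1: "\<bar>GI b G L (us (r1 i)) - GI b G L g\<bar> < \<eta>/8"
        by (rule \<delta>h[OF wd_cont[OF vs]]) (use cl1 \<delta> in force)
      have g2: "\<bar>GI b G L (us (r1 j)) - GI b G L g\<bar> < \<eta>/8"
        by (rule \<delta>h[OF wd_cont[OF vs]]) (use cl2 \<delta> in force)
      have wA: "\<bar>GI b G L (\<lambda>x. 1/2 * us (r1 i) x + 1/2 * us (r1 j) x + ((m1-m2)/2) * x / L) - GI b G L g\<bar> < \<eta>/8"
        by (rule wclose) simp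
      have wB: "\<bar>GI b G L (\<lambda>x. 1/2 * us (r1 i) x + 1/2 * us (r1 j) x + (-((m1-m2)/2)) * x / L) - GI b G L g\<bar> < \<eta>/8"
        by (rule wclose) simp
      have pA: "((m1-m2)/(2*L))\<^sup>2 * A1 \<le> \<eta>/4"
      proof -
        have d1: "\<bar>m1 - m2\<bar> \<le> 1" using \<Delta> unfolding s0_def by simp
        have d2: "\<bar>m1 - m2\<bar> * (A1 + 1) \<le> \<eta> * L\<^sup>2"
        proof -
          have "\<bar>m1 - m2\<bar> \<le> \<eta> * L\<^sup>2 / (A1 + 1)" using \<Delta> unfolding s0_def by simp
          thus ?thesis using A1 by (simp add: field_simps)
        qed
        have "(m1 - m2)\<^sup>2 \<le> \<bar>m1 - m2\<bar>"
        proof -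
          have "\<bar>m1 - m2\<bar> * \<bar>m1 - m2\<bar> \<le> \<bar>m1 - m2\<bar> * 1" using d1 by (intro mult_left_mono) auto
          thus ?thesis by (simp add: power2_eq_square abs_mult_self_eq)
        qed
        hence "(m1 - m2)\<^sup>2 * A1 \<le> \<bar>m1 - m2\<bar> * (A1 + 1)"
          using A1 by (meson add_increasing2 less_eq_real_def mult_mono zero_le_one abs_ge_zero zero_le_power2 order_trans le_add_same_cancel1)
        also have "\<dots> \<le> \<eta> * L\<^sup>2" by (rule d2)
        finally have "(m1 - m2)\<^sup>2 * A1 \<le> \<eta> * L\<^sup>2" .
        hence "(m1 - m2)\<^sup>2 * A1 / (4 * L\<^sup>2) \<le> \<eta> * L\<^sup>2 / (4 * L\<^sup>2)" using Lp by (intro divide_right_mono) auto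
        thus ?thesis using Lp by (simp add: power_divide power_mult_distrib field_simps)
      qed
      have AIb: "AI a L (\<lambda>x. vs (r1 i) x - vs (r1 j) x) < 3 * \<eta>"
        using mi wA wB g1 g2 pA unfolding A1_def[symmetric] by (simp add: abs_less_iff; argo)
      have Dm: "(\<lambda>x. V (r1 i) x - V (r1 j) x) \<in> borel_measurable lborel" using Vm by measurable
      have Ds: "integrable lborel (\<lambda>x. (V (r1 i) x - V (r1 j) x)\<^sup>2)" by (rule sq_diff_int[OF Vm Vm Vs Vs])
      have "amin * (LINT x|lborel. (V (r1 i) x - V (r1 j) x)\<^sup>2) \<le> (LINT x|lborel. a x * (V (r1 i) x - V (r1 j) x)\<^sup>2)"
      proof (rule AI_lower[OF a_cont amin(2) Dm Ds])
        fix x :: real assume xn: "x \<notin> {-L..L}"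
        show "V (r1 i) x - V (r1 j) x = 0" by (simp only: Vz[OF xn] diff_self)
      qed
      also have "\<dots> = AI a L (\<lambda>x. vs (r1 i) x - vs (r1 j) x)"
        unfolding AI_def V_def by (simp add: algebra_simps)
      also have "\<dots> < 3 * \<eta>" by (rule AIb)
      also have "\<dots> \<le> amin * e" using \<eta> unfolding \<eta>_def by simp
      finally show "(LINT x|lborel. (V (r1 i) x - V (r1 j) x)\<^sup>2) < e" using amin(1) by simp
    qed
  qed
  have Vz': "\<And>n x. x \<notin> {-L..L} \<Longrightarrow> V (r1 n) x = 0" using Vz by blast
  obtain r2 :: "nat \<Rightarrow> nat" and v :: "real \<Rightarrow> real" where r2: "strict_mono r2"
    and vm: "v \<in> borel_measurable lborel" and vsq: "integrable lborel (\<lambda>x. (v x)\<^sup>2)"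
    and vz: "\<And>x. x \<notin> {-L..L} \<Longrightarrow> v x = 0"
    and Dc: "(\<lambda>n. LINT x|lborel. (V (r1 (r2 n)) x - v x)\<^sup>2) \<longlonglongrightarrow> 0"
  proof -
    show thesis
    proof (rule RF[of "\<lambda>n. V (r1 n)" "-L" L, OF Vm Vs Vz' _ cauchyV])
      fix rr :: "nat \<Rightarrow> nat" and vv :: "real \<Rightarrow> real"
      assume "strict_mono rr" "vv \<in> borel_measurable lborel" "integrable lborel (\<lambda>x. (vv x)\<^sup>2)"
        "\<And>x. x \<notin> {-L..L} \<Longrightarrow> vv x = 0" "(\<lambda>n. LINT x|lborel. (V (r1 (rr n)) x - vv x)\<^sup>2) \<longlonglongrightarrow> 0"
      thus thesis by (rule that)
    qed (use Lp in auto)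
  qed
  define r where "r = r1 \<circ> r2"
  have r: "strict_mono r" using r1 r2 unfolding r_def strict_mono_def by auto
  have Dconv: "(\<lambda>n. LINT x|lborel. (V (r n) x - v x)\<^sup>2) \<longlonglongrightarrow> 0" using Dc unfolding r_def by simp
  have uconv: "\<exists>N. \<forall>n\<ge>N. \<forall>x\<in>{-L..L}. \<bar>us (r n) x - g x\<bar> < e" if e: "0 < e" for e
  proof -
    obtain N where N: "\<forall>n x. n \<ge> N \<and> x \<in> {-L..L} \<longrightarrow> norm (us (r1 n) x - g x) < e" using gconv[OF e] by blast
    show ?thesis
    proof (intro exI allI impI ballI)
      fix n x assume n: "N \<le> n" and x: "x \<in> {-L..L}"
      have "n \<le> r2 n" using seq_suble[OF r2] by simp
      hence "N \<le> r2 n" using n by simp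
      thus "\<bar>us (r n) x - g x\<bar> < e" using N x unfolding r_def by auto
    qed
  qed
  have pconv: "(\<lambda>n. us (r n) x) \<longlonglongrightarrow> g x" if x: "x \<in> {-L..L}" for x
  proof (rule LIMSEQ_I)
    fix e :: real assume "0 < e"
    then obtain N where "\<forall>n\<ge>N. \<forall>x\<in>{-L..L}. \<bar>us (r n) x - g x\<bar> < e" using uconv by blast
    hence "\<forall>n\<ge>N. norm (us (r n) x - g x) < e" using x by simp
    thus "\<exists>no. \<forall>n\<ge>no. norm (us (r n) x - g x) < e" by blast
  qed
  have msr: "(\<lambda>n. ms (r n)) \<longlonglongrightarrow> m" using LIMSEQ_subseq_LIMSEQ[OF ms_lim r] by (simp add: o_def)
  have Vrm: "\<And>n. V (r n) \<in> borel_measurable lborel" by (rule Vm)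
  have Vrs: "\<And>n. integrable lborel (\<lambda>x. (V (r n) x)\<^sup>2)" by (rule Vs)
  have Vrz: "\<And>n x. x \<notin> {-L..L} \<Longrightarrow> V (r n) x = 0" using Vz by blast
  have gform: "g x = - m + (LINT t|lborel. indicator {-L..x} t * v t)" if x: "x \<in> {-L..L}" for x
  proof -
    have e1: "us (r n) x = - ms (r n) + (LINT t|lborel. indicator {-L..x} t * V (r n) t)" for n
    proof -
      have "us (r n) x = us (r n) (-L) + (LINT t|lborel. indicator {-L..x} t * vs (r n) t)" by (rule wd_eq[OF vs x])
      moreover have "us (r n) (-L) = - ms (r n)" using h1m[of "r n"] unfolding H1m_def by simp
      moreover have "(\<lambda>t. indicator {-L..x} t * V (r n) t) = (\<lambda>t. indicator {-L..x} t * vs (r n) t)"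
        unfolding V_def using x by (intro ext ind_sub) auto
      ultimately show ?thesis by simp
    qed
    have "(\<lambda>n. LINT t|lborel. indicator {-L..x} t * V (r n) t) \<longlonglongrightarrow> (LINT t|lborel. indicator {-L..x} t * v t)"
      by (rule L1_tendsto[OF Vrm Vrs Vrz vm vsq vz Dconv]) measurable
    hence "(\<lambda>n. - ms (r n) + (LINT t|lborel. indicator {-L..x} t * V (r n) t)) \<longlonglongrightarrow> - m + (LINT t|lborel. indicator {-L..x} t * v t)"
      by (intro tendsto_intros msr)
    hence "(\<lambda>n. us (r n) x) \<longlonglongrightarrow> - m + (LINT t|lborel. indicator {-L..x} t * v t)" by (simp only: e1)
    thus ?thesis using pconv[OF x] LIMSEQ_unique by blast
  qed
  have gmL: "g (-L) = - m"
  proof -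
    have "(\<lambda>n. us (r n) (-L)) \<longlonglongrightarrow> - m"
    proof -
      have "us (r n) (-L) = - ms (r n)" for n using h1m[of "r n"] unfolding H1m_def by simp
      thus ?thesis using tendsto_minus[OF msr] by simp
    qed
    thus ?thesis using pconv[of "-L"] Lp LIMSEQ_unique by auto
  qed
  have gL: "g L = m"
  proof -
    have "(\<lambda>n. us (r n) L) \<longlonglongrightarrow> m"
    proof -
      have "us (r n) L = ms (r n)" for n using h1m[of "r n"] unfolding H1m_def by simp
      thus ?thesis using msr by simp
    qed
    thus ?thesis using pconv[of L] Lp LIMSEQ_unique by auto
  qed
  have indv: "(\<lambda>x. indicator {-L..L} x * v x) = v" using vz by (auto simp: fun_eq_iff indicator_def)
  have indvx: "indicator {-L..L} x * v x = v x" for x using vz by (auto simp: indicator_def)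
  have vg: "is_wderiv L g v"
    unfolding is_wderiv_def set_borel_measurable_def set_integrable_def set_lebesgue_integral_def
  proof (intro conjI ballI)
    show "(\<lambda>x. indicator {-L..L} x *\<^sub>R v x) \<in> borel_measurable lborel" using vm indv by simp
    have "(\<lambda>x. indicator {-L..L} x *\<^sub>R (v x)\<^sup>2) = (\<lambda>x. (v x)\<^sup>2)" using vz by (auto simp: fun_eq_iff indicator_def)
    thus "integrable lborel (\<lambda>x. indicator {-L..L} x *\<^sub>R (v x)\<^sup>2)" using vsq by simp
    fix x assume x: "x \<in> {-L..L}"
    show "g x = g (-L) + (LINT t|lborel. indicator {-L..x} t *\<^sub>R v t)"
      using gform[OF x] gmL by simp
  qed
  have h1g: "H1m L m g" unfolding H1m_def H1_def using vg gmL gL by auto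
  have conv1: "(\<lambda>k. LINT x:{-L..L}|lborel. (us (r k) x - g x)\<^sup>2) \<longlonglongrightarrow> 0"
  proof (rule LIMSEQ_I)
    fix e :: real assume e: "0 < e"
    define \<epsilon> where "\<epsilon> = min 1 (e / (2*L+1))"
    have \<epsilon>: "0 < \<epsilon>" using e Lp by (simp add: \<epsilon>_def)
    obtain N where N: "\<forall>n\<ge>N. \<forall>x\<in>{-L..L}. \<bar>us (r n) x - g x\<bar> < \<epsilon>" using uconv[OF \<epsilon>] by blast
    show "\<exists>no. \<forall>n\<ge>no. norm ((LINT x:{-L..L}|lborel. (us (r n) x - g x)\<^sup>2) - 0) < e"
    proof (intro exI allI impI)
      fix n assume n: "N \<le> n"
      have ci: "continuous_on {-L..L} (\<lambda>x. (us (r n) x - g x)\<^sup>2)"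
        by (intro continuous_intros wd_cont[OF vs] g)
      have ii: "integrable lborel (\<lambda>x. indicator {-L..L} x *\<^sub>R (us (r n) x - g x)\<^sup>2)"
        by (rule borel_integrable_compact[OF _ ci]) simp
      have "(LINT x:{-L..L}|lborel. (us (r n) x - g x)\<^sup>2) \<le> (LINT x|lborel. indicator {-L..L} x * (\<epsilon> * \<epsilon>))"
        unfolding set_lebesgue_integral_def
      proof (rule integral_mono[OF ii ind_const_int])
        fix x show "indicator {-L..L} x *\<^sub>R (us (r n) x - g x)\<^sup>2 \<le> indicator {-L..L} x * (\<epsilon> * \<epsilon>)"
        proof (cases "x \<in> {-L..L}")
          case True
          have "\<bar>us (r n) x - g x\<bar> < \<epsilon>" using N n True by blast
          hence "\<bar>us (r n) x - g x\<bar> * \<bar>us (r n) x - g x\<bar> \<le> \<epsilon> * \<epsilon>" by (intro mult_mono) auto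
          thus ?thesis using True by (simp add: power2_eq_square abs_mult_self_eq)
        qed simp
      qed
      also have "\<dots> = \<epsilon> * \<epsilon> * (2*L)" using int_ind_const[of "-L" L "\<epsilon> * \<epsilon>"] Lp by simp
      also have "\<dots> \<le> \<epsilon> * (2*L)"
      proof -
        have "\<epsilon> * \<epsilon> \<le> \<epsilon> * 1" using \<epsilon> unfolding \<epsilon>_def by (intro mult_left_mono) auto
        thus ?thesis using Lp by (intro mult_right_mono) auto
      qed
      also have "\<dots> < e"
      proof -
        have "\<epsilon> \<le> e / (2*L+1)" unfolding \<epsilon>_def by simp
        hence "\<epsilon> * (2*L) \<le> e / (2*L+1) * (2*L)" using Lp by (intro mult_right_mono) auto
        also have "\<dots> < e" using e Lp by (simp add: field_simps)
        finally show ?thesis .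
      qed
      finally have up: "(LINT x:{-L..L}|lborel. (us (r n) x - g x)\<^sup>2) < e" .
      have "0 \<le> (LINT x:{-L..L}|lborel. (us (r n) x - g x)\<^sup>2)"
        unfolding set_lebesgue_integral_def by (rule Bochner_Integration.integral_nonneg) (simp add: indicator_def)
      thus "norm ((LINT x:{-L..L}|lborel. (us (r n) x - g x)\<^sup>2) - 0) < e" using up by simp
    qed
  qed
  have conv2: "(\<lambda>k. LINT x:{-L..L}|lborel. (w k x - v' x)\<^sup>2) \<longlonglongrightarrow> 0"
    if v': "is_wderiv L g v'" and w: "\<And>k. is_wderiv L (us (r k)) (w k)" for v' w
  proof -
    have eq: "(LINT x:{-L..L}|lborel. (w k x - v' x)\<^sup>2) = (LINT x|lborel. (V (r k) x - v x)\<^sup>2)" for k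
    proof -
      have "(LINT x:{-L..L}|lborel. (w k x - v' x)\<^sup>2) = (LINT x|lborel. (indicator {-L..L} x * w k x - indicator {-L..L} x * v' x)\<^sup>2)"
        unfolding set_lebesgue_integral_def
        by (rule Bochner_Integration.integral_cong[OF refl]) (simp add: indicator_def)
      also have "\<dots> = (LINT x|lborel. (V (r k) x - v x)\<^sup>2)"
      proof (rule integral_cong_AE)
        show "(\<lambda>x. (indicator {-L..L} x * w k x - indicator {-L..L} x * v' x)\<^sup>2) \<in> borel_measurable lborel"
          using wd_meas[OF w[of k]] wd_meas[OF v'] by measurable
        show "(\<lambda>x. (V (r k) x - v x)\<^sup>2) \<in> borel_measurable lborel" using Vm vm by measurable
        have a1: "AE x in lborel. indicator {-L..L} x * w k x = V (r k) x"
          using wd_unique[OF w[of k] vs[of "r k"] Lp] unfolding V_def .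
        have a2: "AE x in lborel. indicator {-L..L} x * v' x = v x"
          using wd_unique[OF v' vg Lp] by (simp only: indvx)
        show "AE x in lborel. (indicator {-L..L} x * w k x - indicator {-L..L} x * v' x)\<^sup>2 = (V (r k) x - v x)\<^sup>2"
          using a1 a2 by eventually_elim simp
      qed
      finally show ?thesis .
    qed
    show ?thesis unfolding eq by (rule Dconv)
  qed
  have H1c: "H1_converges L (\<lambda>k. us (r k)) g"
    unfolding H1_converges_def using conv1 conv2 by blast
  have unif: "uniform_limit {-L..L} (\<lambda>k. us (r k)) g sequentially"
    unfolding uniform_limit_sequentially_iff dist_real_def using uconv by blast
  have AIconv: "(\<lambda>k. AI a L (vs (r k))) \<longlonglongrightarrow> AI a L v"
  proof -
    have "(\<lambda>k. LINT x|lborel. a x * (V (r k) x)\<^sup>2) \<longlonglongrightarrow> (LINT x|lborel. a x * (v x)\<^sup>2)"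
      by (rule AI_tendsto[OF a_cont Vrm Vrs Vrz vm vsq vz Dconv])
    thus ?thesis unfolding AI_def V_def[symmetric] by (simp only: indvx)
  qed
  have GIconv: "(\<lambda>k. GI b G L (h k)) \<longlonglongrightarrow> GI b G L gg"
    if gg: "continuous_on {-L..L} gg" and hc: "\<And>k. continuous_on {-L..L} (h k)"
      and hconv: "\<And>e. 0 < e \<Longrightarrow> \<exists>N. \<forall>n\<ge>N. \<forall>x\<in>{-L..L}. \<bar>h n x - gg x\<bar> < e" for h gg
  proof (rule LIMSEQ_I)
    fix e :: real assume e: "0 < e"
    obtain \<delta> where \<delta>: "\<delta> > 0" and \<delta>h: "\<And>hh. continuous_on {-L..L} hh \<Longrightarrow> (\<forall>x\<in>{-L..L}. \<bar>hh x - gg x\<bar> < \<delta>) \<Longrightarrow> \<bar>GI b G L hh - GI b G L gg\<bar> < e"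
      using GI_unif[OF b_cont G_cont gg Lp e] by blast
    obtain N where N: "\<forall>n\<ge>N. \<forall>x\<in>{-L..L}. \<bar>h n x - gg x\<bar> < \<delta>" using hconv[OF \<delta>] by blast
    show "\<exists>no. \<forall>n\<ge>no. norm (GI b G L (h n) - GI b G L gg) < e"
      using \<delta>h[OF hc] N by auto
  qed
  have Econv: "(\<lambda>k. AI a L (vs (r k)) / 2 + GI b G L (us (r k))) \<longlonglongrightarrow> AI a L v / 2 + GI b G L g"
    by (intro tendsto_intros AIconv GIconv[OF g wd_cont[OF vs] uconv]) simp_all
  have minim: "minimizer a b G L m g"
    unfolding minimizer_def
  proof (intro conjI allI impI)
    show "H1m L m g" by (rule h1g)
    fix w v1 v2 assume hw: "H1m L m w" and v1: "is_wderiv L g v1" and v2: "is_wderiv L w v2"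
    have "energy a b G L g v1 = AI a L v1 / 2 + GI b G L g" by (rule energy_split[OF a_cont b_cont G_cont v1])
    also have "AI a L v1 = AI a L v" by (rule AI_cong[OF a_cont v1 vg Lp])
    finally have eg: "energy a b G L g v1 = AI a L v / 2 + GI b G L g" .
    define d where "d k = ms (r k) - m" for k
    have d0: "d \<longlonglongrightarrow> 0" unfolding d_def using tendsto_diff[OF msr tendsto_const[of m]] by simp
    have wk: "is_wderiv L (\<lambda>x. w x + d k * x / L) (\<lambda>x. v2 x + d k / L)" for k by (rule wd_shift[OF v2 Lp])
    have hk: "H1m L (ms (r k)) (\<lambda>x. w x + d k * x / L)" for k
      using H1m_shift[OF hw v2 Lp, of "d k"] unfolding d_def by simp
    have le: "AI a L (vs (r k)) / 2 + GI b G L (us (r k)) \<le> AI a L (\<lambda>x. v2 x + d k / L) / 2 + GI b G L (\<lambda>x. w x + d k * x / L)" for k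
    proof -
      have "energy a b G L (us (r k)) (vs (r k)) \<le> energy a b G L (\<lambda>x. w x + d k * x / L) (\<lambda>x. v2 x + d k / L)"
        using mn[of "r k"] hk[of k] vs[of "r k"] wk[of k] unfolding minimizer_def by blast
      thus ?thesis using energy_split[OF a_cont b_cont G_cont vs[of "r k"]] energy_split[OF a_cont b_cont G_cont wk[of k]] by simp
    qed
    define X where "X = (LINT x|lborel. a x * (indicator {-L..L} x * v2 x))"
    have AIs: "AI a L (\<lambda>x. v2 x + d k / L) = AI a L v2 + 2 * (d k / L) * X + (d k / L)\<^sup>2 * A1" for k
      unfolding X_def A1_def by (rule AI_shift[OF a_cont v2])
    have c1: "(\<lambda>k. AI a L (\<lambda>x. v2 x + d k / L)) \<longlonglongrightarrow> AI a L v2 + 2 * (0 / L) * X + (0 / L)\<^sup>2 * A1"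
      unfolding AIs by (intro tendsto_intros d0) (use Lp in simp_all)
    have c2: "(\<lambda>k. GI b G L (\<lambda>x. w x + d k * x / L)) \<longlonglongrightarrow> GI b G L w"
    proof (rule GIconv[OF wd_cont[OF v2] wd_cont[OF wk]])
      fix e :: real assume e: "0 < e"
      obtain N where N: "\<forall>n\<ge>N. norm (d n - 0) < e" using LIMSEQ_D[OF d0 e] by blast
      show "\<exists>N. \<forall>n\<ge>N. \<forall>x\<in>{-L..L}. \<bar>w x + d n * x / L - w x\<bar> < e"
      proof (intro exI allI impI ballI)
        fix n x assume n: "N \<le> n" and x: "x \<in> {-L..L}"
        have "\<bar>x / L\<bar> \<le> 1" using x Lp by (auto simp: abs_le_iff field_simps)
        hence "\<bar>d n\<bar> * \<bar>x / L\<bar> \<le> \<bar>d n\<bar> * 1" by (intro mult_left_mono) auto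
        moreover have "\<bar>d n * x / L\<bar> = \<bar>d n\<bar> * \<bar>x / L\<bar>" by (simp only: times_divide_eq_right[symmetric] abs_mult)
        moreover have "\<bar>d n\<bar> < e" using N n by simp
        ultimately have "\<bar>d n * x / L\<bar> < e" by linarith
        thus "\<bar>w x + d n * x / L - w x\<bar> < e" by simp
      qed
    qed
    have "(\<lambda>k. AI a L (\<lambda>x. v2 x + d k / L) / 2 + GI b G L (\<lambda>x. w x + d k * x / L)) \<longlonglongrightarrow> AI a L v2 / 2 + GI b G L w"
      using tendsto_add[OF tendsto_divide[OF c1 tendsto_const[of 2]] c2] by simp
    hence "AI a L v / 2 + GI b G L g \<le> AI a L v2 / 2 + GI b G L w"
      by (rule LIMSEQ_le[OF Econv]) (use le in blast)
    also have "AI a L v2 / 2 + GI b G L w = energy a b G L w v2"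
      by (rule energy_split[OF a_cont b_cont G_cont v2, symmetric])
    finally show "energy a b G L g v1 \<le> energy a b G L w v2" unfolding eg .
  qed
  show ?thesis using r minim H1c unif by blast
qed


end
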